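(* Let $(\mathcal R,\tau)$ be a t-minimal Hausdorff geometric structure and $\mathcal S$ a lore of $(\mathcal R,\tau)$. Let $X$ be definable over $A$ and let $x\in X$ be generic over $A$. Then $x\in X^{lman}$.
   Context: A structure $\mathcal R$ is geometric if $\operatorname{acl}$ satisfies exchange and $\mathcal R$ eliminates $\exists^\infty$; $\dim$ denotes acl-dimension, and $a\in X$ is generic over $A$ if $\dim(a/A)=\dim(X)$. "Definable" allows parameters. Given a topology $\tau$ on $R$ (extended to definable subsets of $R^n$ by product and subspace topologies), $(\mathcal R,\tau)$ is a Hausdorff geometric structure if: (1) $\tau$ is Hausdorff; (2) $\mathcal R$ is geometric and $\aleph_1$-saturated; (3) if $X\subset R^n$ is $A$-definable and $a\in\overline{\overline X-X}$ then $\dim(a/A)<\dim(X)$; (4) if $X$ is definable over a countable $A$, $a\in X$ generic over $A$, and $B\supseteq A$ countable, every neighborhood of $a$ contains a generic of $X$ over $B$; (5) if $X,Y$, $Z\subset X\times Y$ are $A$-definable of the same dimension with both projections of $Z$ finite-to-one and $(x,y)\in Z$ generic over $A$, then $Z$ restricted to some $U\times V$ ($U\ni x$, $V\ni y$ open) is the graph of a homeomorphism $U\to V$. It is t-minimal if moreover $\tau$ has a basis given by the instances of a parameter-free formula, and $R$ has no isolated points. A lore is a collection $\mathcal S$ of definable sets ("loric sets") such that: (i) $R$ and the diagonal of $R^2$ are loric, and loric sets are closed under finite products, finite intersections, coordinate permutations; (ii) if $f:X\to Y$ is a definable homeomorphism with $X$ and the graph of $f$ loric, then $Y$ is loric; (iii)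 definable open subsets of loric sets are loric, and a definable set with an open cover by loric sets is loric; (iv) every nonempty $A$-definable $X$ has a relatively open $A$-definable loric subset $X'$ with $\dim(X-X')<\dim(X)$. A loric map is a continuous function with loric graph; a loric homeomorphism is a loric map that is a homeomorphism. For a definable $X$ with $\dim(X)=n$, a point $x\in X$ is a loric manifold point if there is a definable relatively open $U$ with $x\in U\subset X$ that is lorically homeomorphic to an open subset of $R^n$; $X^{lman}$ is the set of loric manifold points of $X$. *)

theory Defs
  imports "HOL-Analysis.Analysis"
begin

section \<open>First-order structures (relational signature, universe = UNIV of 'a)\<close>

text \<open>Formulas with named variables; the structure interprets each relation
symbol r as a predicate on lists of elements (its arity is implicit).\<close>

datatype 'r fm = Eq nat nat | Rel 'r "nat list" | Neg "'r fm" | Conj "'r fm" "'r fm" | Ex nat "'r fm"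

fun fv :: "'r fm \<Rightarrow> nat set" where
  "fv (Eq i j) = {i, j}"
| "fv (Rel r vs) = set vs"
| "fv (Neg \<phi>) = fv \<phi>"
| "fv (Conj \<phi> \<psi>) = fv \<phi> \<union> fv \<psi>"
| "fv (Ex x \<phi>) = fv \<phi> - {x}"

fun sat :: "('r \<Rightarrow> 'a list \<Rightarrow> bool) \<Rightarrow> (nat \<Rightarrow> 'a) \<Rightarrow> 'r fm \<Rightarrow> bool" where
  "sat I v (Eq i j) = (v i = v j)"
| "sat I v (Rel r vs) = I r (map v vs)"
| "sat I v (Neg \<phi>) = (\<not> sat I v \<phi>)"
| "sat I v (Conj \<phi> \<psi>) = (sat I v \<phi> \<and> sat I v \<psi>)"
| "sat I v (Ex x \<phi>) = (\<exists>a. sat I (v(x := a)) \<phi>)"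

section \<open>Tuples: R^n is represented by extensional functions on {..<n}\<close>

definition Rn :: "nat \<Rightarrow> (nat \<Rightarrow> 'a) set" where
  "Rn n = PiE {..<n} (\<lambda>_. UNIV)"

definition join :: "nat \<Rightarrow> nat \<Rightarrow> (nat \<Rightarrow> 'a) \<Rightarrow> (nat \<Rightarrow> 'a) \<Rightarrow> (nat \<Rightarrow> 'a)" where
  "join n m x y = (\<lambda>i. if i < n then x i else if i < n + m then y (i - n) else undefined)"

definition tprod :: "nat \<Rightarrow> nat \<Rightarrow> (nat \<Rightarrow> 'a) set \<Rightarrow> (nat \<Rightarrow> 'a) set \<Rightarrow> (nat \<Rightarrow> 'a) set" where
  "tprod n m X Y = {join n m x y | x y. x \<in> X \<and> y \<in> Y}"

definition graph :: "nat \<Rightarrow> nat \<Rightarrow> (nat \<Rightarrow> 'a) set \<Rightarrow> ((nat \<Rightarrow> 'a) \<Rightarrow> (nat \<Rightarrow> 'a)) \<Rightarrow> (nat \<Rightarrow> 'a) set" where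
  "graph n m U f = {join n m u (f u) | u. u \<in> U}"

definition Tn :: "'a topology \<Rightarrow> nat \<Rightarrow> (nat \<Rightarrow> 'a) topology" where
  "Tn \<tau> n = product_topology (\<lambda>_. \<tau>) {..<n}"

definition definable_over :: "('r \<Rightarrow> 'a list \<Rightarrow> bool) \<Rightarrow> nat \<Rightarrow> 'a set \<Rightarrow> (nat \<Rightarrow> 'a) set \<Rightarrow> bool" where
  "definable_over I n A X \<longleftrightarrow> X \<subseteq> Rn n \<and>
     (\<exists>\<phi> p. (\<forall>i \<in> fv \<phi>. n \<le> i \<longrightarrow> p i \<in> A) \<and>
            X = {x \<in> Rn n. sat I (\<lambda>i. if i < n then x i else p i) \<phi>})"

definition definable :: "('r \<Rightarrow> 'a list \<Rightarrow> bool) \<Rightarrow> nat \<Rightarrow> (nat \<Rightarrow> 'a) set \<Rightarrow> bool" where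
  "definable I n X \<longleftrightarrow> definable_over I n UNIV X"

definition acl :: "('r \<Rightarrow> 'a list \<Rightarrow> bool) \<Rightarrow> 'a set \<Rightarrow> 'a set" where
  "acl I A = {b. \<exists>\<phi> p. (\<forall>i \<in> fv \<phi>. i \<noteq> 0 \<longrightarrow> p i \<in> A) \<and>
       finite {c. sat I (p(0 := c)) \<phi>} \<and> sat I (p(0 := b)) \<phi>}"

definition dim_over :: "('r \<Rightarrow> 'a list \<Rightarrow> bool) \<Rightarrow> nat \<Rightarrow> (nat \<Rightarrow> 'a) \<Rightarrow> 'a set \<Rightarrow> nat" where
  "dim_over I n a A = (LEAST k. \<exists>S \<subseteq> {..<n}. card S = k \<and> (\<forall>i < n. a i \<in> acl I (A \<union> a ` S)))"

text \<open>dim(X) = max of dim(a/A), a in X, A a small (countable) parameter set over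
which X is defined (independent of A in an aleph_1-saturated geometric
structure); dim of the empty set is -1 (standing for -infinity).\<close>
definition dim :: "('r \<Rightarrow> 'a list \<Rightarrow> bool) \<Rightarrow> nat \<Rightarrow> (nat \<Rightarrow> 'a) set \<Rightarrow> int" where
  "dim I n X = (if X = {} then -1 else
     Max {int (dim_over I n a A) | a A. countable A \<and> definable_over I n A X \<and> a \<in> X})"

definition generic :: "('r \<Rightarrow> 'a list \<Rightarrow> bool) \<Rightarrow> nat \<Rightarrow> (nat \<Rightarrow> 'a) set \<Rightarrow> (nat \<Rightarrow> 'a) \<Rightarrow> 'a set \<Rightarrow> bool" where
  "generic I n X a A \<longleftrightarrow> a \<in> X \<and> int (dim_over I n a A) = dim I n X"

definition acl_exchange :: "('r \<Rightarrow> 'a list \<Rightarrow> bool) \<Rightarrow> bool" where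
  "acl_exchange I \<longleftrightarrow> (\<forall>A a b. b \<in> acl I (A \<union> {a}) - acl I A \<longrightarrow> a \<in> acl I (A \<union> {b}))"

text \<open>Elimination of the quantifier "there exist infinitely many" (uniform finiteness).\<close>
definition elim_exists_infinity :: "('r \<Rightarrow> 'a list \<Rightarrow> bool) \<Rightarrow> bool" where
  "elim_exists_infinity I \<longleftrightarrow> (\<forall>\<phi>. \<exists>N::nat. \<forall>p.
      finite {c. sat I (p(0 := c)) \<phi>} \<longrightarrow> card {c. sat I (p(0 := c)) \<phi>} \<le> N)"

definition geometric :: "('r \<Rightarrow> 'a list \<Rightarrow> bool) \<Rightarrow> bool" where
  "geometric I \<longleftrightarrow> acl_exchange I \<and> elim_exists_infinity I"

definition aleph1_saturated :: "('r \<Rightarrow> 'a list \<Rightarrow> bool) \<Rightarrow> bool" where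
  "aleph1_saturated I \<longleftrightarrow> (\<forall>(A::'a set) (\<Phi> :: ('r fm \<times> (nat \<Rightarrow> 'a)) set).
     countable A \<and> (\<forall>(\<phi>, p) \<in> \<Phi>. \<forall>i \<in> fv \<phi>. i \<noteq> 0 \<longrightarrow> p i \<in> A) \<and>
     (\<forall>F \<subseteq> \<Phi>. finite F \<longrightarrow> (\<exists>c. \<forall>(\<phi>, p) \<in> F. sat I (p(0 := c)) \<phi>)) \<longrightarrow>
     (\<exists>c. \<forall>(\<phi>, p) \<in> \<Phi>. sat I (p(0 := c)) \<phi>))"

definition hausdorff_geometric :: "('r \<Rightarrow> 'a list \<Rightarrow> bool) \<Rightarrow> 'a topology \<Rightarrow> bool" where
  "hausdorff_geometric I \<tau> \<longleftrightarrow>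
    topspace \<tau> = UNIV \<and>
    \<comment> \<open>(1)\<close> Hausdorff_space \<tau> \<and>
    \<comment> \<open>(2)\<close> geometric I \<and> aleph1_saturated I \<and>
    \<comment> \<open>(3)\<close> (\<forall>n A X a. definable_over I n A X \<and>
          a \<in> (Tn \<tau> n) closure_of ((Tn \<tau> n) closure_of X - X) \<longrightarrow>
          int (dim_over I n a A) < dim I n X) \<and>
    \<comment> \<open>(4)\<close> (\<forall>n A X a B U. countable A \<and> definable_over I n A X \<and> generic I n X a A \<and>
          countable B \<and> A \<subseteq> B \<and> openin (Tn \<tau> n) U \<and> a \<in> U \<longrightarrow>
          (\<exists>b \<in> U. generic I n X b B)) \<and>
    \<comment> \<open>(5)\<close> (\<forall>n m A X Y Z x y.
          definable_over I n A X \<and> definable_over I m A Y \<and> definable_over I (n + m) A Z \<and>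
          Z \<subseteq> tprod n m X Y \<and> dim I n X = dim I m Y \<and> dim I (n + m) Z = dim I n X \<and>
          (\<forall>u. finite {v \<in> Rn m. join n m u v \<in> Z}) \<and>
          (\<forall>v. finite {u \<in> Rn n. join n m u v \<in> Z}) \<and>
          x \<in> Rn n \<and> y \<in> Rn m \<and> generic I (n + m) Z (join n m x y) A \<longrightarrow>
          (\<exists>U V f. openin (subtopology (Tn \<tau> n) X) U \<and> x \<in> U \<and>
                   openin (subtopology (Tn \<tau> m) Y) V \<and> y \<in> V \<and>
                   homeomorphic_map (subtopology (Tn \<tau> n) U) (subtopology (Tn \<tau> m) V) f \<and>
                   Z \<inter> tprod n m U V = graph n m U f))"

definition t_minimal :: "('r \<Rightarrow> 'a list \<Rightarrow> bool) \<Rightarrow> 'a topology \<Rightarrow> bool" where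
  "t_minimal I \<tau> \<longleftrightarrow> hausdorff_geometric I \<tau> \<and>
    (\<exists>\<phi>. (\<forall>p. openin \<tau> {c. sat I (p(0 := c)) \<phi>}) \<and>
         (\<forall>U a. openin \<tau> U \<and> a \<in> U \<longrightarrow>
            (\<exists>p. a \<in> {c. sat I (p(0 := c)) \<phi>} \<and> {c. sat I (p(0 := c)) \<phi>} \<subseteq> U))) \<and>
    (\<forall>a. \<not> openin \<tau> {a})"

text \<open>A lore is given as a predicate L n X ("X \<subseteq> R^n is loric").\<close>
definition lore :: "('r \<Rightarrow> 'a list \<Rightarrow> bool) \<Rightarrow> 'a topology \<Rightarrow> (nat \<Rightarrow> (nat \<Rightarrow> 'a) set \<Rightarrow> bool) \<Rightarrow> bool" where
  "lore I \<tau> L \<longleftrightarrow>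
    (\<forall>n X. L n X \<longrightarrow> definable I n X) \<and>
    \<comment> \<open>(i)\<close> L 1 (Rn 1) \<and> L 2 {x \<in> Rn 2. x 0 = x 1} \<and>
    (\<forall>n m X Y. L n X \<and> L m Y \<longrightarrow> L (n + m) (tprod n m X Y)) \<and>
    (\<forall>n X Y. L n X \<and> L n Y \<longrightarrow> L n (X \<inter> Y)) \<and>
    (\<forall>n X \<sigma>. L n X \<and> \<sigma> permutes {..<n} \<longrightarrow> L n ((\<lambda>x. x \<circ> \<sigma>) ` X)) \<and>
    \<comment> \<open>(ii)\<close> (\<forall>n m X Y f. L n X \<and> Y \<subseteq> Rn m \<and> L (n + m) (graph n m X f) \<and>
          homeomorphic_map (subtopology (Tn \<tau> n) X) (subtopology (Tn \<tau> m) Y) f \<longrightarrow> L m Y) \<and>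
    \<comment> \<open>(iii)\<close> (\<forall>n X U. L n X \<and> definable I n U \<and> openin (subtopology (Tn \<tau> n) X) U \<longrightarrow> L n U) \<and>
    (\<forall>n X. definable I n X \<and>
          (\<forall>x \<in> X. \<exists>U. openin (subtopology (Tn \<tau> n) X) U \<and> x \<in> U \<and> L n U) \<longrightarrow> L n X) \<and>
    \<comment> \<open>(iv)\<close> (\<forall>n A X. definable_over I n A X \<and> X \<noteq> {} \<longrightarrow>
          (\<exists>X'. openin (subtopology (Tn \<tau> n) X) X' \<and> definable_over I n A X' \<and> L n X' \<and>
                dim I n (X - X') < dim I n X))"

definition loric_map :: "'a topology \<Rightarrow> (nat \<Rightarrow> (nat \<Rightarrow> 'a) set \<Rightarrow> bool) \<Rightarrow> nat \<Rightarrow> nat \<Rightarrow>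
     (nat \<Rightarrow> 'a) set \<Rightarrow> (nat \<Rightarrow> 'a) set \<Rightarrow> ((nat \<Rightarrow> 'a) \<Rightarrow> (nat \<Rightarrow> 'a)) \<Rightarrow> bool" where
  "loric_map \<tau> L n m U V f \<longleftrightarrow>
     continuous_map (subtopology (Tn \<tau> n) U) (subtopology (Tn \<tau> m) V) f \<and> L (n + m) (graph n m U f)"

definition loric_homeomorphism :: "'a topology \<Rightarrow> (nat \<Rightarrow> (nat \<Rightarrow> 'a) set \<Rightarrow> bool) \<Rightarrow> nat \<Rightarrow> nat \<Rightarrow>
     (nat \<Rightarrow> 'a) set \<Rightarrow> (nat \<Rightarrow> 'a) set \<Rightarrow> ((nat \<Rightarrow> 'a) \<Rightarrow> (nat \<Rightarrow> 'a)) \<Rightarrow> bool" where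
  "loric_homeomorphism \<tau> L n m U V f \<longleftrightarrow>
     loric_map \<tau> L n m U V f \<and>
     homeomorphic_map (subtopology (Tn \<tau> n) U) (subtopology (Tn \<tau> m) V) f"

definition lman :: "('r \<Rightarrow> 'a list \<Rightarrow> bool) \<Rightarrow> 'a topology \<Rightarrow> (nat \<Rightarrow> (nat \<Rightarrow> 'a) set \<Rightarrow> bool) \<Rightarrow>
     nat \<Rightarrow> (nat \<Rightarrow> 'a) set \<Rightarrow> (nat \<Rightarrow> 'a) set" where
  "lman I \<tau> L n X = {x \<in> X. \<exists>U. definable I n U \<and> openin (subtopology (Tn \<tau> n) X) U \<and> x \<in> U \<and>
      (\<exists>V f. openin (Tn \<tau> (nat (dim I n X))) V \<and>
             loric_homeomorphism \<tau> L n (nat (dim I n X)) U V f)}"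

end

theory Submission
  imports Defs
begin

fun ren :: "(nat \<Rightarrow> nat) \<Rightarrow> 'r fm \<Rightarrow> 'r fm" where
  "ren g (Eq i j) = Eq (g i) (g j)"
| "ren g (Rel r vs) = Rel r (map g vs)"
| "ren g (Neg \<phi>) = Neg (ren g \<phi>)"
| "ren g (Conj \<phi> \<psi>) = Conj (ren g \<phi>) (ren g \<psi>)"
| "ren g (Ex x \<phi>) = Ex (g x) (ren g \<phi>)"

lemma sat_ren: "inj g \<Longrightarrow> sat I v (ren g \<phi>) = sat I (v \<circ> g) \<phi>"
proof (induction \<phi> arbitrary: v)
  case (Ex x \<phi>)
  have e: "\<And>a. (v(g x := a)) \<circ> g = (v \<circ> g)(x := a)"
    using Ex.prems by (auto simp: fun_eq_iff inj_eq)
  have "sat I v (ren g (Ex x \<phi>)) = (\<exists>a. sat I (v(g x := a)) (ren g \<phi>))" by simp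
  also have "\<dots> = (\<exists>a. sat I ((v(g x := a)) \<circ> g) \<phi>)"
  proof -
    have "\<And>a. sat I (v(g x := a)) (ren g \<phi>) = sat I ((v(g x := a)) \<circ> g) \<phi>"
      by (rule Ex.IH[OF Ex.prems])
    then show ?thesis by simp
  qed
  also have "\<dots> = (\<exists>a. sat I ((v \<circ> g)(x := a)) \<phi>)" by (simp only: e)
  also have "\<dots> = sat I (v \<circ> g) (Ex x \<phi>)" by (simp only: sat.simps)
  finally show ?case .
qed simp_all

lemma fv_ren: "inj g \<Longrightarrow> fv (ren g \<phi>) = g ` fv \<phi>"
  by (induction \<phi>) (simp_all add: image_Un image_set_diff)

lemma sat_cong: "(\<And>i. i \<in> fv \<phi> \<Longrightarrow> v i = w i) \<Longrightarrow> sat I v \<phi> = sat I w \<phi>"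
proof (induction \<phi> arbitrary: v w)
  case (Rel r vs)
  have "map v vs = map w vs" unfolding map_eq_conv using Rel.prems by simp
  then show ?case by (simp only: sat.simps)
next
  case (Ex x \<phi>)
  have "sat I (v(x := a)) \<phi> = sat I (w(x := a)) \<phi>" for a
  proof (rule Ex.IH)
    fix i assume "i \<in> fv \<phi>"
    then show "(v(x := a)) i = (w(x := a)) i" using Ex.prems[of i] by (cases "i = x") simp_all
  qed
  then show ?case by simp
next
  case (Eq i j) then show ?case by simp
next
  case (Neg \<phi>)
  have "sat I v \<phi> = sat I w \<phi>" by (rule Neg.IH) (use Neg.prems in simp)
  then show ?case by simp
next
  case (Conj \<phi> \<psi>)
  have "sat I v \<phi> = sat I w \<phi>" by (rule Conj.IH(1)) (use Conj.prems in simp)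
  moreover have "sat I v \<psi> = sat I w \<psi>" by (rule Conj.IH(2)) (use Conj.prems in simp)
  ultimately show ?case by simp
qed

definition dfn0 :: "('r \<Rightarrow> 'a list \<Rightarrow> bool) \<Rightarrow> nat set \<Rightarrow> ((nat \<Rightarrow> 'a) \<Rightarrow> bool) \<Rightarrow> bool" where
  "dfn0 I V Q \<longleftrightarrow> (\<exists>\<phi>. fv \<phi> \<subseteq> V \<and> (\<forall>v. Q v = sat I v \<phi>))"

lemma dfn0_dep: "dfn0 I V Q \<Longrightarrow> (\<And>i. i \<in> V \<Longrightarrow> v i = w i) \<Longrightarrow> Q v = Q w"
proof -
  assume "dfn0 I V Q" and h: "\<And>i. i \<in> V \<Longrightarrow> v i = w i"
  then obtain \<phi> where "fv \<phi> \<subseteq> V" "\<forall>v. Q v = sat I v \<phi>" unfolding dfn0_def by blast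
  moreover have "sat I v \<phi> = sat I w \<phi>" by (rule sat_cong) (use h \<open>fv \<phi> \<subseteq> V\<close> in blast)
  ultimately show "Q v = Q w" by simp
qed

lemma dfn0_mono: "dfn0 I V Q \<Longrightarrow> V \<subseteq> W \<Longrightarrow> dfn0 I W Q"
  unfolding dfn0_def by blast

lemma dfn0_conj: "dfn0 I V P \<Longrightarrow> dfn0 I V Q \<Longrightarrow> dfn0 I V (\<lambda>v. P v \<and> Q v)"
  unfolding dfn0_def
proof (elim exE conjE)
  fix \<phi> \<psi> assume "fv \<phi> \<subseteq> V" "\<forall>v. P v = sat I v \<phi>" "fv \<psi> \<subseteq> V" "\<forall>v. Q v = sat I v \<psi>"
  then show "\<exists>\<theta>. fv \<theta> \<subseteq> V \<and> (\<forall>v. (P v \<and> Q v) = sat I v \<theta>)"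
    by (intro exI[of _ "Conj \<phi> \<psi>"]) auto
qed

lemma dfn0_neg: "dfn0 I V P \<Longrightarrow> dfn0 I V (\<lambda>v. \<not> P v)"
  unfolding dfn0_def
proof (elim exE conjE)
  fix \<phi> assume "fv \<phi> \<subseteq> V" "\<forall>v. P v = sat I v \<phi>"
  then show "\<exists>\<theta>. fv \<theta> \<subseteq> V \<and> (\<forall>v. (\<not> P v) = sat I v \<theta>)"
    by (intro exI[of _ "Neg \<phi>"]) auto
qed

lemma dfn0_eq: "i \<in> V \<Longrightarrow> j \<in> V \<Longrightarrow> dfn0 I V (\<lambda>v. v i = v j)"
  unfolding dfn0_def by (intro exI[of _ "Eq i j"]) auto

lemma dfn0_true: "dfn0 I V (\<lambda>v. True)"
  unfolding dfn0_def by (intro exI[of _ "Ex 0 (Eq 0 0)"]) auto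

lemma dfn0_ex: "dfn0 I V Q \<Longrightarrow> dfn0 I (V - {j}) (\<lambda>v. \<exists>a. Q (v(j := a)))"
  unfolding dfn0_def
proof (elim exE conjE)
  fix \<phi> assume "fv \<phi> \<subseteq> V" "\<forall>v. Q v = sat I v \<phi>"
  then show "\<exists>\<theta>. fv \<theta> \<subseteq> V - {j} \<and> (\<forall>v. (\<exists>a. Q (v(j := a))) = sat I v \<theta>)"
    by (intro exI[of _ "Ex j \<phi>"]) auto
qed

lemma dfn0_conj_fin: "finite K \<Longrightarrow> (\<And>k. k \<in> K \<Longrightarrow> dfn0 I V (Q k)) \<Longrightarrow> dfn0 I V (\<lambda>v. \<forall>k\<in>K. Q k v)"
proof (induction K rule: finite_induct)
  case empty then show ?case using dfn0_true by simp
next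
  case (insert k K)
  have a: "dfn0 I V (Q k)" using insert.prems by simp
  have b: "dfn0 I V (\<lambda>v. \<forall>k\<in>K. Q k v)" by (rule insert.IH) (rule insert.prems, simp)
  have "dfn0 I V (\<lambda>v. Q k v \<and> (\<forall>k\<in>K. Q k v))"
    using dfn0_conj[OF a b] .
  moreover have "(\<lambda>v. Q k v \<and> (\<forall>k\<in>K. Q k v)) = (\<lambda>v. \<forall>k\<in>insert k K. Q k v)" by (simp only: ball_simps)
  ultimately show ?case by (simp only:)
qed

lemma dfn0_exs: "finite Y \<Longrightarrow> dfn0 I V Q \<Longrightarrow> dfn0 I (V - Y) (\<lambda>v. \<exists>w. Q (\<lambda>i. if i \<in> Y then w i else v i))"
proof (induction Y rule: finite_induct)
  case empty then show ?case by simp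
next
  case (insert y Y)
  define R where "R = (\<lambda>v. \<exists>w. Q (\<lambda>i. if i \<in> Y then w i else v i))"
  have d1: "dfn0 I (V - Y - {y}) (\<lambda>v. \<exists>a. R (v(y:=a)))"
    unfolding R_def by (rule dfn0_ex[OF insert.IH[OF insert.prems]])
  have eqv: "(\<exists>a. R (v(y:=a))) =
      (\<exists>w. Q (\<lambda>i. if i \<in> insert y Y then w i else v i))" for v
  proof
    assume "\<exists>a. R (v(y:=a))"
    then obtain a w where "Q (\<lambda>i. if i \<in> Y then w i else (v(y:=a)) i)" unfolding R_def by blast
    moreover have "(\<lambda>i. if i \<in> Y then w i else (v(y:=a)) i) = (\<lambda>i. if i \<in> insert y Y then (w(y:=a)) i else v i)"
      using insert.hyps by (auto simp: fun_eq_iff)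
    ultimately show "\<exists>w. Q (\<lambda>i. if i \<in> insert y Y then w i else v i)" by metis
  next
    assume "\<exists>w. Q (\<lambda>i. if i \<in> insert y Y then w i else v i)"
    then obtain w where "Q (\<lambda>i. if i \<in> insert y Y then w i else v i)" by blast
    moreover have "(\<lambda>i. if i \<in> insert y Y then w i else v i) = (\<lambda>i. if i \<in> Y then w i else (v(y:=w y)) i)"
      using insert.hyps by (auto simp: fun_eq_iff)
    ultimately show "\<exists>a. R (v(y:=a))" unfolding R_def by metis
  qed
  have e2: "(\<lambda>v. \<exists>a. R (v(y:=a))) = (\<lambda>v. \<exists>w. Q (\<lambda>i. if i \<in> insert y Y then w i else v i))"
    using eqv by (intro ext)
  have e3: "V - Y - {y} = V - insert y Y" by blast
  show ?case using d1 unfolding e2 e3 .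
qed

lemma dfn0_ren: "inj g \<Longrightarrow> dfn0 I V Q \<Longrightarrow> dfn0 I (g ` V) (\<lambda>v. Q (v \<circ> g))"
  unfolding dfn0_def
proof (elim exE conjE)
  fix \<phi> assume "inj g" "fv \<phi> \<subseteq> V" "\<forall>v. Q v = sat I v \<phi>"
  then show "\<exists>\<theta>. fv \<theta> \<subseteq> g ` V \<and> (\<forall>v. Q (v \<circ> g) = sat I v \<theta>)"
  proof (intro exI[of _ "ren g \<phi>"] conjI allI)
    show "fv (ren g \<phi>) \<subseteq> g ` V" using \<open>inj g\<close> \<open>fv \<phi> \<subseteq> V\<close> by (simp add: fv_ren image_mono)
    fix v show "Q (v \<circ> g) = sat I v (ren g \<phi>)" using \<open>inj g\<close> \<open>\<forall>v. Q v = sat I v \<phi>\<close> by (simp only: sat_ren)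
  qed
qed

lemma finite_bound: "finite (S::nat set) \<Longrightarrow> \<exists>M. \<forall>i\<in>S. i < M"
  by (metis finite_nat_set_iff_bounded)

lemma dfn0_subst:
  assumes "finite V" "finite W" "g ` V \<subseteq> W" "dfn0 I V Q"
  shows "dfn0 I W (\<lambda>v. Q (v \<circ> g))"
proof -
  obtain M where M: "\<forall>i\<in>V \<union> W. i < M" using finite_bound assms(1,2) by (meson finite_UnI)
  define h where "h = (\<lambda>i::nat. M + i)"
  have injh: "inj h" unfolding h_def by (simp add: inj_on_def)
  have d1: "dfn0 I (h ` V) (\<lambda>v. Q (v \<circ> h))" using dfn0_ren[OF injh assms(4)] .
  define R where "R = (\<lambda>v. Q (v \<circ> h) \<and> (\<forall>i\<in>V. v (h i) = v (g i)))"
  have dR: "dfn0 I (h ` V \<union> W) R"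
    unfolding R_def
  proof (rule dfn0_conj)
    show "dfn0 I (h ` V \<union> W) (\<lambda>v. Q (v \<circ> h))" using dfn0_mono[OF d1] by blast
    show "dfn0 I (h ` V \<union> W) (\<lambda>v. \<forall>i\<in>V. v (h i) = v (g i))"
      by (rule dfn0_conj_fin) (use assms(1,3) in \<open>auto intro!: dfn0_eq\<close>)
  qed
  have fin: "finite (h ` V)" using assms(1) by simp
  have disj: "(h ` V \<union> W) - h ` V = W" using M unfolding h_def by auto
  have d2: "dfn0 I W (\<lambda>v. \<exists>w. R (\<lambda>i. if i \<in> h ` V then w i else v i))"
    using dfn0_exs[OF fin dR] disj by simp
  have eq: "(\<exists>w. R (\<lambda>i. if i \<in> h ` V then w i else v i)) = Q (v \<circ> g)" for v
  proof
    assume "\<exists>w. R (\<lambda>i. if i \<in> h ` V then w i else v i)"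
    then obtain w where w: "R (\<lambda>i. if i \<in> h ` V then w i else v i)" by blast
    define u where "u = (\<lambda>i. if i \<in> h ` V then w i else v i)"
    have "Q (u \<circ> h)" and e: "\<forall>i\<in>V. u (h i) = u (g i)" using w unfolding R_def u_def by auto
    moreover have "\<forall>i\<in>V. (u \<circ> h) i = (v \<circ> g) i"
    proof
      fix i assume "i \<in> V"
      then have "g i \<in> W" using assms(3) by auto
      then have "g i \<notin> h ` V" using M unfolding h_def by auto
      then show "(u \<circ> h) i = (v \<circ> g) i" using e \<open>i \<in> V\<close> unfolding u_def by auto
    qed
    ultimately show "Q (v \<circ> g)" using dfn0_dep[OF assms(4)] by metis
  next
    assume q: "Q (v \<circ> g)"
    define w where "w = (\<lambda>j. v (g (j - M)))"
    define u where "u = (\<lambda>i. if i \<in> h ` V then w i else v i)"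
    have gi: "\<forall>i\<in>V. g i \<notin> h ` V" using M assms(3) unfolding h_def by fastforce
    have "\<forall>i\<in>V. (u \<circ> h) i = (v \<circ> g) i" unfolding u_def w_def h_def by auto
    then have "Q (u \<circ> h)" using q dfn0_dep[OF assms(4)] by metis
    moreover have "\<forall>i\<in>V. u (h i) = u (g i)" using gi unfolding u_def w_def h_def by auto
    ultimately show "\<exists>w. R (\<lambda>i. if i \<in> h ` V then w i else v i)"
      unfolding R_def u_def by blast
  qed
  show ?thesis using d2 eq by simp
qed

lemma finite_fv: "finite (fv \<phi>)"
  by (induction \<phi>) simp_all

definition dfn :: "('r \<Rightarrow> 'a list \<Rightarrow> bool) \<Rightarrow> 'a set \<Rightarrow> nat set \<Rightarrow> ((nat \<Rightarrow> 'a) \<Rightarrow> bool) \<Rightarrow> bool" where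
  "dfn I A V P \<longleftrightarrow> (\<exists>W Q a. finite W \<and> W \<inter> V = {} \<and> dfn0 I (V \<union> W) Q \<and> a ` W \<subseteq> A \<and>
      (\<forall>v. P v = Q (\<lambda>i. if i \<in> W then a i else v i)))"

lemma dfn_fresh:
  assumes "finite F" "finite V" "dfn I A V P"
  shows "\<exists>W Q a. finite W \<and> W \<inter> V = {} \<and> W \<inter> F = {} \<and> dfn0 I (V \<union> W) Q \<and> a ` W \<subseteq> A \<and>
      (\<forall>v. P v = Q (\<lambda>i. if i \<in> W then a i else v i))"
proof -
  obtain W Q a where W: "finite W" "W \<inter> V = {}" "dfn0 I (V \<union> W) Q" "a ` W \<subseteq> A"
    and P: "\<forall>v. P v = Q (\<lambda>i. if i \<in> W then a i else v i)"
    using assms(3) unfolding dfn_def by blast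
  obtain M where M: "\<forall>i\<in>V \<union> W \<union> F. i < M" using finite_bound assms(1,2) W(1) by (meson finite_UnI)
  define h where "h = (\<lambda>i. if i \<in> W then M + i else i)"
  define W' where "W' = (\<lambda>i. M + i) ` W"
  define a' where "a' = (\<lambda>j. a (j - M))"
  have hV: "h ` (V \<union> W) \<subseteq> V \<union> W'" unfolding h_def W'_def by auto
  have d: "dfn0 I (V \<union> W') (\<lambda>u. Q (u \<circ> h))"
    by (rule dfn0_subst[OF _ _ hV W(3)]) (use assms(2) W(1) in \<open>simp_all add: W'_def\<close>)
  have W'V: "W' \<inter> V = {}" and W'F: "W' \<inter> F = {}" using M unfolding W'_def by auto
  have aW: "a' ` W' \<subseteq> A" using W(4) unfolding W'_def a'_def by auto
  have "P v = Q ((\<lambda>j. if j \<in> W' then a' j else v j) \<circ> h)" for v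
  proof -
    have "Q (\<lambda>i. if i \<in> W then a i else v i) = Q ((\<lambda>j. if j \<in> W' then a' j else v j) \<circ> h)"
    proof (rule dfn0_dep[OF W(3)])
      fix i assume i: "i \<in> V \<union> W"
      show "(if i \<in> W then a i else v i) = ((\<lambda>j. if j \<in> W' then a' j else v j) \<circ> h) i"
      proof (cases "i \<in> W")
        case True then show ?thesis unfolding h_def W'_def a'_def by auto
      next
        case False
        then have "i \<in> V" using i by blast
        then have "i \<notin> W'" using M unfolding W'_def by auto
        then show ?thesis using False unfolding h_def by simp
      qed
    qed
    then show ?thesis using P by simp
  qed
  then show ?thesis using d W'V W'F aW W(1) unfolding W'_def by blast
qed

lemma dfn_dep: "dfn I A V P \<Longrightarrow> (\<And>i. i \<in> V \<Longrightarrow> v i = w i) \<Longrightarrow> P v = P w"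
proof -
  assume "dfn I A V P" and h: "\<And>i. i \<in> V \<Longrightarrow> v i = w i"
  then obtain W Q a where W: "W \<inter> V = {}" "dfn0 I (V \<union> W) Q"
    and P: "\<forall>v. P v = Q (\<lambda>i. if i \<in> W then a i else v i)"
    unfolding dfn_def by blast
  have "Q (\<lambda>i. if i \<in> W then a i else v i) = Q (\<lambda>i. if i \<in> W then a i else w i)"
    by (rule dfn0_dep[OF W(2)]) (use h in auto)
  then show "P v = P w" using P by simp
qed

lemma dfn_of_dfn0: "dfn0 I V Q \<Longrightarrow> dfn I A V Q"
  unfolding dfn_def by (intro exI[of _ "{}"] exI[of _ Q]) simp

lemma dfn_true: "dfn I A V (\<lambda>v. True)"
  by (rule dfn_of_dfn0[OF dfn0_true])

lemma dfn_eq: "i \<in> V \<Longrightarrow> j \<in> V \<Longrightarrow> dfn I A V (\<lambda>v. v i = v j)"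
  by (rule dfn_of_dfn0[OF dfn0_eq])

lemma dfn_mono_A: "dfn I A V P \<Longrightarrow> A \<subseteq> B \<Longrightarrow> dfn I B V P"
  unfolding dfn_def by (meson order_trans)

lemma dfn_neg: "dfn I A V P \<Longrightarrow> dfn I A V (\<lambda>v. \<not> P v)"
proof -
  assume "dfn I A V P"
  then obtain W Q a where W: "finite W" "W \<inter> V = {}" "dfn0 I (V \<union> W) Q" "a ` W \<subseteq> A"
    and P: "\<forall>v. P v = Q (\<lambda>i. if i \<in> W then a i else v i)"
    unfolding dfn_def by blast
  show ?thesis unfolding dfn_def
    by (rule exI[of _ W], rule exI[of _ "\<lambda>v. \<not> Q v"], rule exI[of _ a]) (use W P dfn0_neg in auto)
qed

lemma dfn_mono_V: "finite V' \<Longrightarrow> V \<subseteq> V' \<Longrightarrow> dfn I A V P \<Longrightarrow> dfn I A V' P"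
proof -
  assume f: "finite V'" and s: "V \<subseteq> V'" and d: "dfn I A V P"
  have fV: "finite V" using f s finite_subset by blast
  obtain W Q a where W: "finite W" "W \<inter> V = {}" "W \<inter> V' = {}" "dfn0 I (V \<union> W) Q" "a ` W \<subseteq> A"
    and P: "\<forall>v. P v = Q (\<lambda>i. if i \<in> W then a i else v i)"
    using dfn_fresh[OF f fV d] by blast
  have "dfn0 I (V' \<union> W) Q" using dfn0_mono[OF W(4)] s by blast
  then show ?thesis unfolding dfn_def using W P by blast
qed

lemma dfn_conj:
  assumes "finite V" "dfn I A V P1" "dfn I A V P2"
  shows "dfn I A V (\<lambda>v. P1 v \<and> P2 v)"
proof -
  obtain W1 Q1 a1 where W1: "finite W1" "W1 \<inter> V = {}" "dfn0 I (V \<union> W1) Q1" "a1 ` W1 \<subseteq> A"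
    and P1: "\<forall>v. P1 v = Q1 (\<lambda>i. if i \<in> W1 then a1 i else v i)"
    using assms(2) unfolding dfn_def by blast
  obtain W2 Q2 a2 where W2: "finite W2" "W2 \<inter> V = {}" "W2 \<inter> W1 = {}" "dfn0 I (V \<union> W2) Q2" "a2 ` W2 \<subseteq> A"
    and P2: "\<forall>v. P2 v = Q2 (\<lambda>i. if i \<in> W2 then a2 i else v i)"
    using dfn_fresh[OF W1(1) assms(1) assms(3)] by blast
  define a where "a = (\<lambda>i. if i \<in> W1 then a1 i else a2 i)"
  define Q where "Q = (\<lambda>v. Q1 v \<and> Q2 v)"
  have dQ: "dfn0 I (V \<union> (W1 \<union> W2)) Q" unfolding Q_def
    by (rule dfn0_conj; rule dfn0_mono[OF W1(3)] dfn0_mono[OF W2(4)]) auto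
  have "P1 v \<and> P2 v \<longleftrightarrow> Q (\<lambda>i. if i \<in> W1 \<union> W2 then a i else v i)" for v
  proof -
    have "Q1 (\<lambda>i. if i \<in> W1 then a1 i else v i) = Q1 (\<lambda>i. if i \<in> W1 \<union> W2 then a i else v i)"
      by (rule dfn0_dep[OF W1(3)]) (use W2(2) W2(3) in \<open>auto simp: a_def\<close>)
    moreover have "Q2 (\<lambda>i. if i \<in> W2 then a2 i else v i) = Q2 (\<lambda>i. if i \<in> W1 \<union> W2 then a i else v i)"
      by (rule dfn0_dep[OF W2(4)]) (use W2(2) W2(3) W1(2) in \<open>auto simp: a_def\<close>)
    ultimately show ?thesis using P1 P2 unfolding Q_def by simp
  qed
  moreover have "a ` (W1 \<union> W2) \<subseteq> A" using W1(4) W2(5) W2(3) unfolding a_def by auto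
  moreover have "(W1 \<union> W2) \<inter> V = {}" "finite (W1 \<union> W2)" using W1 W2 by auto
  ultimately show ?thesis unfolding dfn_def using dQ by blast
qed

lemma dfn_conj_fin:
  assumes "finite V" "finite K" "\<And>k. k \<in> K \<Longrightarrow> dfn I A V (P k)"
  shows "dfn I A V (\<lambda>v. \<forall>k\<in>K. P k v)"
  using assms(2,3)
proof (induction K rule: finite_induct)
  case empty then show ?case using dfn_true by simp
next
  case (insert k K)
  have a: "dfn I A V (P k)" by (rule insert.prems) simp
  have b: "dfn I A V (\<lambda>v. \<forall>k\<in>K. P k v)" by (rule insert.IH) (rule insert.prems, simp)
  have "dfn I A V (\<lambda>v. P k v \<and> (\<forall>k\<in>K. P k v))" using dfn_conj[OF assms(1) a b] .
  moreover have "(\<lambda>v. P k v \<and> (\<forall>k\<in>K. P k v)) = (\<lambda>v. \<forall>k\<in>insert k K. P k v)" by (simp only: ball_simps)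
  ultimately show ?case by (simp only:)
qed

lemma dfn_exs:
  assumes "finite Y" "Y \<subseteq> V" "dfn I A V P"
  shows "dfn I A (V - Y) (\<lambda>v. \<exists>w. P (\<lambda>i. if i \<in> Y then w i else v i))"
proof -
  obtain W Q a where W: "finite W" "W \<inter> V = {}" "dfn0 I (V \<union> W) Q" "a ` W \<subseteq> A"
    and P: "\<forall>v. P v = Q (\<lambda>i. if i \<in> W then a i else v i)"
    using assms(3) unfolding dfn_def by blast
  define Q' where "Q' = (\<lambda>v. \<exists>w. Q (\<lambda>i. if i \<in> Y then w i else v i))"
  have d: "dfn0 I ((V \<union> W) - Y) Q'"
    unfolding Q'_def by (rule dfn0_exs[OF assms(1) W(3)])
  have e: "(V \<union> W) - Y = (V - Y) \<union> W" using W(2) assms(2) by blast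
  have WY: "W \<inter> Y = {}" using W(2) assms(2) by blast
  have eq: "(\<exists>w. P (\<lambda>i. if i \<in> Y then w i else v i)) = Q' (\<lambda>i. if i \<in> W then a i else v i)" for v
  proof -
    have f: "(\<lambda>i. if i \<in> W then a i else (if i \<in> Y then w i else v i)) =
        (\<lambda>i. if i \<in> Y then w i else (if i \<in> W then a i else v i))" for w
      using WY by (auto simp: fun_eq_iff)
    have "P (\<lambda>i. if i \<in> Y then w i else v i) = Q (\<lambda>i. if i \<in> Y then w i else (if i \<in> W then a i else v i))" for w
    proof -
      have "P (\<lambda>i. if i \<in> Y then w i else v i) = Q (\<lambda>i. if i \<in> W then a i else (if i \<in> Y then w i else v i))"
        using P by (rule allE) simp
      also have "\<dots> = Q (\<lambda>i. if i \<in> Y then w i else (if i \<in> W then a i else v i))" by (simp only: f)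
      finally show ?thesis .
    qed
    then show ?thesis unfolding Q'_def by simp
  qed
  have "W \<inter> (V - Y) = {}" using W(2) by blast
  then show ?thesis unfolding dfn_def
    by (rule_tac exI[of _ W], rule_tac exI[of _ Q'], rule_tac exI[of _ a]) (use W(1,4) d e eq in simp)
qed

lemma dfn_ex:
  assumes "j \<in> V" "dfn I A V P"
  shows "dfn I A (V - {j}) (\<lambda>v. \<exists>a. P (v(j := a)))"
proof -
  have "finite {j}" "{j} \<subseteq> V" using assms(1) by auto
  then have d: "dfn I A (V - {j}) (\<lambda>v. \<exists>w. P (\<lambda>i. if i \<in> {j} then w i else v i))"
    using dfn_exs assms(2) by blast
  have "(\<exists>w. P (\<lambda>i. if i \<in> {j} then w i else v i)) = (\<exists>a. P (v(j := a)))" for v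
  proof
    assume "\<exists>w. P (\<lambda>i. if i \<in> {j} then w i else v i)"
    then obtain w where p: "P (\<lambda>i. if i \<in> {j} then w i else v i)" by blast
    have eq: "(\<lambda>i. if i \<in> {j} then w i else v i) = v(j := w j)" by (auto simp: fun_eq_iff)
    from p have "P (v(j := w j))" by (simp only: eq)
    then show "\<exists>a. P (v(j := a))" by blast
  next
    assume "\<exists>a. P (v(j := a))"
    then obtain a where p: "P (v(j := a))" by blast
    have eq: "(\<lambda>i. if i \<in> {j} then (\<lambda>_. a) i else v i) = v(j := a)" by (auto simp: fun_eq_iff)
    from p have "P (\<lambda>i. if i \<in> {j} then (\<lambda>_. a) i else v i)" by (simp only: eq)
    then show "\<exists>w. P (\<lambda>i. if i \<in> {j} then w i else v i)" by (rule exI[of _ "\<lambda>_. a"])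
  qed
  then have "(\<lambda>v. \<exists>w. P (\<lambda>i. if i \<in> {j} then w i else v i)) = (\<lambda>v. \<exists>a. P (v(j := a)))" by (intro ext)
  with d show ?thesis by (simp only:)
qed

lemma dfn_subst:
  assumes "finite V" "finite V'" "g ` V \<subseteq> V'" "dfn I A V P"
  shows "dfn I A V' (\<lambda>v. P (v \<circ> g))"
proof -
  obtain W Q a where W: "finite W" "W \<inter> V = {}" "W \<inter> V' = {}" "dfn0 I (V \<union> W) Q" "a ` W \<subseteq> A"
    and P: "\<forall>v. P v = Q (\<lambda>i. if i \<in> W then a i else v i)"
    using dfn_fresh[OF assms(2) assms(1) assms(4)] by blast
  define g' where "g' = (\<lambda>i. if i \<in> W then i else g i)"
  have gV: "g' ` (V \<union> W) \<subseteq> V' \<union> W" using assms(3) W(2) unfolding g'_def by auto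
  have d: "dfn0 I (V' \<union> W) (\<lambda>u. Q (u \<circ> g'))"
    by (rule dfn0_subst[OF _ _ gV W(4)]) (use assms(1,2) W(1) in auto)
  have "P (v \<circ> g) = Q ((\<lambda>i. if i \<in> W then a i else v i) \<circ> g')" for v
  proof -
    have "Q (\<lambda>i. if i \<in> W then a i else (v \<circ> g) i) = Q ((\<lambda>i. if i \<in> W then a i else v i) \<circ> g')"
    proof (rule dfn0_dep[OF W(4)])
      fix i assume i: "i \<in> V \<union> W"
      show "(if i \<in> W then a i else (v \<circ> g) i) = ((\<lambda>i. if i \<in> W then a i else v i) \<circ> g') i"
      proof (cases "i \<in> W")
        case True then show ?thesis unfolding g'_def by simp
      next
        case False
        then have "i \<in> V" using i by blast
        then have "g i \<notin> W" using assms(3) W(3) by blast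
        then show ?thesis using False unfolding g'_def by simp
      qed
    qed
    then show ?thesis using P by simp
  qed
  then show ?thesis unfolding dfn_def using d W(1,3,5) by blast
qed

lemma dfn_inst:
  assumes "finite Y" "Y \<subseteq> V" "b ` Y \<subseteq> A" "dfn I A V P"
  shows "dfn I A (V - Y) (\<lambda>v. P (\<lambda>i. if i \<in> Y then b i else v i))"
proof -
  obtain W Q a where W: "finite W" "W \<inter> V = {}" "dfn0 I (V \<union> W) Q" "a ` W \<subseteq> A"
    and P: "\<forall>v. P v = Q (\<lambda>i. if i \<in> W then a i else v i)"
    using assms(4) unfolding dfn_def by blast
  define a' where "a' = (\<lambda>i. if i \<in> Y then b i else a i)"
  have e: "(V - Y) \<union> (W \<union> Y) = V \<union> W" using assms(2) by blast
  have "P (\<lambda>i. if i \<in> Y then b i else v i) = Q (\<lambda>i. if i \<in> W \<union> Y then a' i else v i)" for v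
  proof -
    have "(\<lambda>i. if i \<in> W then a i else (if i \<in> Y then b i else v i)) = (\<lambda>i. if i \<in> W \<union> Y then a' i else v i)"
      using W(2) assms(2) unfolding a'_def by (auto simp: fun_eq_iff)
    then show ?thesis using P by simp
  qed
  moreover have "a' ` (W \<union> Y) \<subseteq> A" using W(4) assms(3) unfolding a'_def by auto
  moreover have "(W \<union> Y) \<inter> (V - Y) = {}" "finite (W \<union> Y)" using W(1,2) assms(1) by auto
  ultimately show ?thesis unfolding dfn_def using W(3) e by (intro exI[of _ "W \<union> Y"]) auto
qed

lemma dfn_param_abs:
  assumes "finite V" "z \<notin> V" "dfn I (A \<union> {c}) V P"
  shows "\<exists>Q. dfn I A (insert z V) Q \<and> (\<forall>v. P v = Q (v(z := c)))"
proof -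
  obtain W Q a where W: "finite W" "W \<inter> V = {}" "W \<inter> {z} = {}" "dfn0 I (V \<union> W) Q" "a ` W \<subseteq> A \<union> {c}"
    and P: "\<forall>v. P v = Q (\<lambda>i. if i \<in> W then a i else v i)"
    using dfn_fresh[of "{z}", OF _ assms(1) assms(3)] by blast
  define Wc where "Wc = {i \<in> W. a i \<notin> A}"
  define g where "g = (\<lambda>i. if i \<in> Wc then z else i)"
  have gV: "g ` (V \<union> W) \<subseteq> insert z V \<union> (W - Wc)" unfolding g_def by auto
  have d: "dfn0 I (insert z V \<union> (W - Wc)) (\<lambda>u. Q (u \<circ> g))"
    by (rule dfn0_subst[OF _ _ gV W(4)]) (use assms(1) W(1) in auto)
  define Q' where "Q' = (\<lambda>v. Q ((\<lambda>i. if i \<in> W - Wc then a i else v i) \<circ> g))"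
  have dQ': "dfn I A (insert z V) Q'"
    unfolding dfn_def Q'_def
  proof (intro exI conjI allI)
    show "finite (W - Wc)" using W(1) by simp
    show "(W - Wc) \<inter> insert z V = {}" using W(2,3) by auto
    show "a ` (W - Wc) \<subseteq> A" unfolding Wc_def by auto
  qed (rule d, rule refl)
  have "P v = Q' (v(z := c))" for v
  proof -
    have "Q (\<lambda>i. if i \<in> W then a i else v i) = Q ((\<lambda>i. if i \<in> W - Wc then a i else (v(z := c)) i) \<circ> g)"
    proof (rule dfn0_dep[OF W(4)])
      fix i assume i: "i \<in> V \<union> W"
      show "(if i \<in> W then a i else v i) = ((\<lambda>i. if i \<in> W - Wc then a i else (v(z := c)) i) \<circ> g) i"
      proof (cases "i \<in> Wc")
        case True
        then have "a i = c" using W(5) unfolding Wc_def by auto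
        moreover have "z \<notin> W" using W(3) by auto
        ultimately show ?thesis using True unfolding g_def Wc_def by auto
      next
        case False
        then have gi: "g i = i" unfolding g_def by simp
        show ?thesis
        proof (cases "i \<in> W")
          case True then show ?thesis using False gi by simp
        next
          case F2: False
          then have "i \<in> V" using i by blast
          then have "i \<noteq> z" using assms(2) by blast
          then show ?thesis using False F2 gi by simp
        qed
      qed
    qed
    then show ?thesis using P unfolding Q'_def by simp
  qed
  then show ?thesis using dQ' by blast
qed

lemma dfn_finite_params: "dfn I A V P \<Longrightarrow> \<exists>A0. finite A0 \<and> A0 \<subseteq> A \<and> dfn I A0 V P"
proof -
  assume "dfn I A V P"
  then obtain W Q a where W: "finite W" "W \<inter> V = {}" "dfn0 I (V \<union> W) Q" "a ` W \<subseteq> A"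
    and P: "\<forall>v. P v = Q (\<lambda>i. if i \<in> W then a i else v i)"
    unfolding dfn_def by blast
  have "dfn I (a ` W) V P" unfolding dfn_def using W P by blast
  then show ?thesis using W(1,4) by blast
qed

lemma dfn_iff_fm:
  "dfn I A V P \<longleftrightarrow> (\<exists>\<phi> p. (\<forall>i\<in>fv \<phi>. i \<notin> V \<longrightarrow> p i \<in> A) \<and>
      (\<forall>v. P v = sat I (\<lambda>i. if i \<in> V then v i else p i) \<phi>))"
proof
  assume "dfn I A V P"
  then obtain W Q a where W: "finite W" "W \<inter> V = {}" "dfn0 I (V \<union> W) Q" "a ` W \<subseteq> A"
    and P: "\<forall>v. P v = Q (\<lambda>i. if i \<in> W then a i else v i)"
    unfolding dfn_def by blast
  obtain \<phi> where \<phi>: "fv \<phi> \<subseteq> V \<union> W" "\<forall>v. Q v = sat I v \<phi>" using W(3) unfolding dfn0_def by blast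
  have "P v = sat I (\<lambda>i. if i \<in> V then v i else a i) \<phi>" for v
  proof -
    have "sat I (\<lambda>i. if i \<in> W then a i else v i) \<phi> = sat I (\<lambda>i. if i \<in> V then v i else a i) \<phi>"
      by (rule sat_cong) (use \<phi>(1) W(2) in auto)
    then show ?thesis using P \<phi>(2) by simp
  qed
  moreover have "\<forall>i\<in>fv \<phi>. i \<notin> V \<longrightarrow> a i \<in> A" using \<phi>(1) W(4) by auto
  ultimately show "\<exists>\<phi> p. (\<forall>i\<in>fv \<phi>. i \<notin> V \<longrightarrow> p i \<in> A) \<and>
      (\<forall>v. P v = sat I (\<lambda>i. if i \<in> V then v i else p i) \<phi>)" by blast
next
  assume "\<exists>\<phi> p. (\<forall>i\<in>fv \<phi>. i \<notin> V \<longrightarrow> p i \<in> A) \<and>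
      (\<forall>v. P v = sat I (\<lambda>i. if i \<in> V then v i else p i) \<phi>)"
  then obtain \<phi> p where p: "\<forall>i\<in>fv \<phi>. i \<notin> V \<longrightarrow> p i \<in> A"
    and P: "\<forall>v. P v = sat I (\<lambda>i. if i \<in> V then v i else p i) \<phi>" by blast
  define W where "W = fv \<phi> - V"
  have d: "dfn0 I (V \<union> W) (\<lambda>v. sat I v \<phi>)" unfolding dfn0_def W_def by auto
  have "P v = sat I (\<lambda>i. if i \<in> W then p i else v i) \<phi>" for v
  proof -
    have "sat I (\<lambda>i. if i \<in> V then v i else p i) \<phi> = sat I (\<lambda>i. if i \<in> W then p i else v i) \<phi>"
      by (rule sat_cong) (auto simp: W_def)
    then show ?thesis using P by simp
  qed
  moreover have "finite W" "W \<inter> V = {}" "p ` W \<subseteq> A" using p finite_fv unfolding W_def by auto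
  ultimately show "dfn I A V P" unfolding dfn_def using d by blast
qed

lemma acl_iff: "b \<in> acl I A \<longleftrightarrow> (\<exists>P. dfn I A {0} P \<and> finite {c. P (\<lambda>_. c)} \<and> P (\<lambda>_. b))"
proof
  assume "b \<in> acl I A"
  then obtain \<phi> p where p: "\<forall>i \<in> fv \<phi>. i \<noteq> 0 \<longrightarrow> p i \<in> A"
    and f: "finite {c. sat I (p(0 := c)) \<phi>}" and b: "sat I (p(0 := b)) \<phi>"
    unfolding acl_def by blast
  define P where "P = (\<lambda>v::nat \<Rightarrow> _. sat I (p(0 := v 0)) \<phi>)"
  have e: "(\<lambda>i. if i \<in> {0} then v i else p i) = p(0 := v 0)" for v :: "nat \<Rightarrow> 'a" by (auto simp: fun_eq_iff)
  have "dfn I A {0} P" unfolding dfn_iff_fm P_def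
    by (rule exI[of _ \<phi>], rule exI[of _ p]) (use p e in simp)
  moreover have "finite {c. P (\<lambda>_. c)}" using f unfolding P_def by simp
  moreover have "P (\<lambda>_. b)" using b unfolding P_def by simp
  ultimately show "\<exists>P. dfn I A {0} P \<and> finite {c. P (\<lambda>_. c)} \<and> P (\<lambda>_. b)" by blast
next
  assume "\<exists>P. dfn I A {0} P \<and> finite {c. P (\<lambda>_. c)} \<and> P (\<lambda>_. b)"
  then obtain P where d: "dfn I A {0} P" and f: "finite {c. P (\<lambda>_. c)}" and b: "P (\<lambda>_. b)" by blast
  obtain \<phi> p where p: "\<forall>i\<in>fv \<phi>. i \<notin> {0} \<longrightarrow> p i \<in> A"
    and P: "\<forall>v. P v = sat I (\<lambda>i. if i \<in> {0} then v i else p i) \<phi>"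
    using d unfolding dfn_iff_fm by blast
  have e: "(\<lambda>i. if i \<in> {0} then (\<lambda>_. c) i else p i) = p(0 := c)" for c :: 'a by (auto simp: fun_eq_iff)
  have Pc: "P (\<lambda>_. c) = sat I (p(0 := c)) \<phi>" for c using P e by simp
  show "b \<in> acl I A" unfolding acl_def
    by (rule CollectI, rule exI[of _ \<phi>], rule exI[of _ p]) (use p f b Pc in simp)
qed

lemma definable_iff: "definable_over I n A X \<longleftrightarrow> X \<subseteq> Rn n \<and> (\<exists>P. dfn I A {..<n} P \<and> X = {x \<in> Rn n. P x})"
proof
  assume "definable_over I n A X"
  then obtain \<phi> p where X: "X \<subseteq> Rn n" and p: "\<forall>i \<in> fv \<phi>. n \<le> i \<longrightarrow> p i \<in> A"
    and Xe: "X = {x \<in> Rn n. sat I (\<lambda>i. if i < n then x i else p i) \<phi>}"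
    unfolding definable_over_def by blast
  define P where "P = (\<lambda>x. sat I (\<lambda>i. if i < n then x i else p i) \<phi>)"
  have "dfn I A {..<n} P" unfolding dfn_iff_fm P_def
    by (rule exI[of _ \<phi>], rule exI[of _ p]) (use p in auto)
  then show "X \<subseteq> Rn n \<and> (\<exists>P. dfn I A {..<n} P \<and> X = {x \<in> Rn n. P x})" using X Xe unfolding P_def by blast
next
  assume "X \<subseteq> Rn n \<and> (\<exists>P. dfn I A {..<n} P \<and> X = {x \<in> Rn n. P x})"
  then obtain P where X: "X \<subseteq> Rn n" and d: "dfn I A {..<n} P" and Xe: "X = {x \<in> Rn n. P x}" by blast
  obtain \<phi> p where p: "\<forall>i\<in>fv \<phi>. i \<notin> {..<n} \<longrightarrow> p i \<in> A"
    and P: "\<forall>v. P v = sat I (\<lambda>i. if i \<in> {..<n} then v i else p i) \<phi>"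
    using d unfolding dfn_iff_fm by blast
  have "X = {x \<in> Rn n. sat I (\<lambda>i. if i < n then x i else p i) \<phi>}" using Xe P by simp
  moreover have "\<forall>i \<in> fv \<phi>. n \<le> i \<longrightarrow> p i \<in> A" using p by auto
  ultimately show "definable_over I n A X" unfolding definable_over_def using X by blast
qed

lemma definable_over_finite: "definable_over I n A X \<Longrightarrow> \<exists>A0. finite A0 \<and> A0 \<subseteq> A \<and> definable_over I n A0 X"
  unfolding definable_iff using dfn_finite_params by metis

lemma definable_over_mono: "definable_over I n A X \<Longrightarrow> A \<subseteq> B \<Longrightarrow> definable_over I n B X"
  unfolding definable_iff using dfn_mono_A by metis

lemma acl_mono: "A \<subseteq> B \<Longrightarrow> b \<in> acl I A \<Longrightarrow> b \<in> acl I B"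
  unfolding acl_iff using dfn_mono_A by metis

lemma acl_base: "b \<in> A \<Longrightarrow> b \<in> acl I A"
proof -
  assume b: "b \<in> A"
  have d0: "dfn I A {0, 1} (\<lambda>v. v 0 = v 1)" by (rule dfn_eq) auto
  have "dfn I A ({0, 1} - {1}) (\<lambda>v. (\<lambda>i. if i \<in> {1} then (\<lambda>_. b) i else v i) 0 = (\<lambda>i. if i \<in> {1} then (\<lambda>_. b) i else v i) 1)"
    by (rule dfn_inst[OF _ _ _ d0]) (use b in auto)
  moreover have "{0::nat, 1} - {1} = {0}" by auto
  ultimately have "dfn I A {0} (\<lambda>v. v 0 = b)" by simp
  moreover have "finite {c. (\<lambda>_. c) 0 = b}" by simp
  ultimately show "b \<in> acl I A" unfolding acl_iff by (intro exI[of _ "\<lambda>v. v 0 = b"]) simp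
qed

lemma card_ge_iff:
  "(\<exists>f. inj_on f {..(N::nat)} \<and> f ` {..N} \<subseteq> S) \<longleftrightarrow> \<not> (finite S \<and> card S \<le> N)"
proof
  assume "\<exists>f. inj_on f {..N} \<and> f ` {..N} \<subseteq> S"
  then obtain f where f: "inj_on f {..N}" "f ` {..N} \<subseteq> S" by blast
  show "\<not> (finite S \<and> card S \<le> N)"
  proof
    assume a: "finite S \<and> card S \<le> N"
    have "card {..N} \<le> card S" using card_inj_on_le[OF f] a by blast
    then show False using a by simp
  qed
next
  assume a: "\<not> (finite S \<and> card S \<le> N)"
  have "\<exists>T. T \<subseteq> S \<and> finite T \<and> card T = Suc N"
  proof (cases "finite S")
    case True
    then have "Suc N \<le> card S" using a by simp
    then obtain T where "T \<subseteq> S" "card T = Suc N" using obtain_subset_with_card_n by metis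
    moreover have "finite T" using \<open>T \<subseteq> S\<close> True finite_subset by blast
    ultimately show ?thesis by blast
  next
    case False
    then show ?thesis using infinite_arbitrarily_large by blast
  qed
  then obtain T where T: "T \<subseteq> S" "finite T" "card T = Suc N" by blast
  obtain h where h: "bij_betw h {0..<card T} T" using ex_bij_betw_nat_finite[OF T(2)] by blast
  have "{0..<card T} = {..N}" using T(3) by auto
  then have "inj_on h {..N} \<and> h ` {..N} \<subseteq> S" using h T(1) unfolding bij_betw_def by auto
  then show "\<exists>f. inj_on f {..N} \<and> f ` {..N} \<subseteq> S" by blast
qed

lemma dfn_atmost:
  assumes "finite V" "j \<in> V" "dfn I A V P"
  shows "dfn I A V (\<lambda>v. finite {e. P (v(j := e))} \<and> card {e. P (v(j := e))} \<le> N)"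
proof -
  obtain M where M: "\<forall>i\<in>V. i < M" using finite_bound assms(1) by blast
  define Y where "Y = (\<lambda>k. M + k) ` {..N}"
  have fY: "finite Y" unfolding Y_def by simp
  have fVY: "finite (V \<union> Y)" using fY assms(1) by simp
  define G where "G = (\<lambda>v. (\<forall>k1\<in>{..N}. \<forall>k2\<in>{..N}. k1 \<noteq> k2 \<longrightarrow> v (M + k1) \<noteq> v (M + k2)) \<and>
                          (\<forall>k\<in>{..N}. P (v \<circ> (id(j := M + k)))))"
  have d1: "dfn I A (V \<union> Y) (\<lambda>v. \<forall>k1\<in>{..N}. \<forall>k2\<in>{..N}. k1 \<noteq> k2 \<longrightarrow> v (M + k1) \<noteq> v (M + k2))"
  proof (rule dfn_conj_fin[OF fVY], simp, rule dfn_conj_fin[OF fVY], simp)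
    fix k1 k2 assume k: "k1 \<in> {..N}" "k2 \<in> {..N}"
    show "dfn I A (V \<union> Y) (\<lambda>v. k1 \<noteq> k2 \<longrightarrow> v (M + k1) \<noteq> v (M + k2))"
    proof (cases "k1 = k2")
      case True then show ?thesis using dfn_true by simp
    next
      case False
      have "dfn I A (V \<union> Y) (\<lambda>v. \<not> v (M + k1) = v (M + k2))"
        by (rule dfn_neg, rule dfn_eq) (use k in \<open>auto simp: Y_def\<close>)
      then show ?thesis using False by simp
    qed
  qed
  have d2: "dfn I A (V \<union> Y) (\<lambda>v. \<forall>k\<in>{..N}. P (v \<circ> (id(j := M + k))))"
  proof (rule dfn_conj_fin[OF fVY], simp)
    fix k assume k: "k \<in> {..N}"
    show "dfn I A (V \<union> Y) (\<lambda>v. P (v \<circ> (id(j := M + k))))"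
      by (rule dfn_subst[OF assms(1) fVY _ assms(3)]) (use k in \<open>auto simp: Y_def\<close>)
  qed
  have dG: "dfn I A (V \<union> Y) G" unfolding G_def by (rule dfn_conj[OF fVY d1 d2])
  have VY: "(V \<union> Y) - Y = V" using M unfolding Y_def by auto
  have dH: "dfn I A V (\<lambda>v. \<exists>w. G (\<lambda>i. if i \<in> Y then w i else v i))"
    using dfn_exs[OF fY _ dG] VY by simp
  have H: "(\<exists>w. G (\<lambda>i. if i \<in> Y then w i else v i)) \<longleftrightarrow>
        (\<exists>f. inj_on f {..N} \<and> f ` {..N} \<subseteq> {e. P (v(j := e))})" for v
  proof
    assume "\<exists>w. G (\<lambda>i. if i \<in> Y then w i else v i)"
    then obtain w where g: "G (\<lambda>i. if i \<in> Y then w i else v i)" by blast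
    define u where "u = (\<lambda>i. if i \<in> Y then w i else v i)"
    have MY: "M + k \<in> Y" if "k \<in> {..N}" for k using that unfolding Y_def by auto
    have dist: "w (M + k1) \<noteq> w (M + k2)" if k: "k1 \<in> {..N}" "k2 \<in> {..N}" "k1 \<noteq> k2" for k1 k2
    proof -
      have "u (M + k1) \<noteq> u (M + k2)" using g k unfolding G_def u_def[symmetric] by blast
      then show ?thesis using MY[OF k(1)] MY[OF k(2)] unfolding u_def by simp
    qed
    have inj: "inj_on (\<lambda>k. w (M + k)) {..N}"
      unfolding inj_on_def using dist by blast
    have "P (v(j := w (M + k)))" if k: "k \<in> {..N}" for k
    proof -
      have "P (u \<circ> (id(j := M + k)))" using g k unfolding G_def u_def by blast
      moreover have "P (u \<circ> (id(j := M + k))) = P (v(j := w (M + k)))"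
      proof (rule dfn_dep[OF assms(3)])
        fix i assume i: "i \<in> V"
        then have "i \<notin> Y" using M unfolding Y_def by auto
        then show "(u \<circ> id(j := M + k)) i = (v(j := w (M + k))) i"
          using MY[OF k] unfolding u_def by auto
      qed
      ultimately show ?thesis by simp
    qed
    then have "(\<lambda>k. w (M + k)) ` {..N} \<subseteq> {e. P (v(j := e))}" by blast
    then show "\<exists>f. inj_on f {..N} \<and> f ` {..N} \<subseteq> {e. P (v(j := e))}"
      using inj by blast
  next
    assume "\<exists>f. inj_on f {..N} \<and> f ` {..N} \<subseteq> {e. P (v(j := e))}"
    then obtain f where f: "inj_on f {..N}" "\<And>k. k \<in> {..N} \<Longrightarrow> P (v(j := f k))" by blast
    define w where "w = (\<lambda>i. f (i - M))"
    define u where "u = (\<lambda>i. if i \<in> Y then w i else v i)"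
    have MY: "M + k \<in> Y" if "k \<in> {..N}" for k using that unfolding Y_def by auto
    have "G u" unfolding G_def
    proof (intro conjI ballI impI)
      fix k1 k2 assume k: "k1 \<in> {..N}" "k2 \<in> {..N}" "k1 \<noteq> k2"
      have "f k1 \<noteq> f k2" using f(1) k unfolding inj_on_def by blast
      then show "u (M + k1) \<noteq> u (M + k2)" using MY[OF k(1)] MY[OF k(2)] unfolding u_def w_def by simp
    next
      fix k assume k: "k \<in> {..N}"
      have "P (v(j := f k)) = P (u \<circ> (id(j := M + k)))"
      proof (rule dfn_dep[OF assms(3)])
        fix i assume i: "i \<in> V"
        then have "i \<notin> Y" using M unfolding Y_def by auto
        then show "(v(j := f k)) i = (u \<circ> id(j := M + k)) i"
          using MY[OF k] unfolding u_def w_def by auto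
      qed
      then show "P (u \<circ> (id(j := M + k)))" using f(2)[OF k] by simp
    qed
    then show "\<exists>w. G (\<lambda>i. if i \<in> Y then w i else v i)" unfolding u_def by blast
  qed
  have "(\<not> (\<exists>w. G (\<lambda>i. if i \<in> Y then w i else v i))) =
        (finite {e. P (v(j := e))} \<and> card {e. P (v(j := e))} \<le> N)" for v
    using H[of v] card_ge_iff[of N "{e. P (v(j := e))}"] by simp
  then have "(\<lambda>v. \<not> (\<exists>w. G (\<lambda>i. if i \<in> Y then w i else v i))) =
        (\<lambda>v. finite {e. P (v(j := e))} \<and> card {e. P (v(j := e))} \<le> N)" by (intro ext)
  then show ?thesis using dfn_neg[OF dH] by simp
qed

lemma acl_trans1:
  assumes b: "b \<in> acl I (C \<union> {c})" and c: "c \<in> acl I C"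
  shows "b \<in> acl I C"
proof -
  obtain P where dP: "dfn I (C \<union> {c}) {0} P" and fP: "finite {e. P (\<lambda>_. e)}" and Pb: "P (\<lambda>_. b)"
    using b unfolding acl_iff by blast
  obtain R where dR: "dfn I C {0} R" and fR: "finite {e. R (\<lambda>_. e)}" and Rc: "R (\<lambda>_. c)"
    using c unfolding acl_iff by blast
  obtain Q where dQ: "dfn I C (insert 1 {0}) Q" and PQ: "\<forall>v. P v = Q (v(1 := c))"
    using dfn_param_abs[of "{0}" 1 I C c P] dP by auto
  define N where "N = card {e. P (\<lambda>_. e)}"
  have f01: "finite (insert (1::nat) {0})" by simp
  have dB: "dfn I C (insert 1 {0}) (\<lambda>v. finite {e. Q (v(0 := e))} \<and> card {e. Q (v(0 := e))} \<le> N)"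
    by (rule dfn_atmost[OF f01 _ dQ]) simp
  have dR': "dfn I C (insert 1 {0}) (\<lambda>v. R (v \<circ> (\<lambda>_. 1)))"
    by (rule dfn_subst[OF _ f01 _ dR]) auto
  define T0 where "T0 = (\<lambda>v. R (v \<circ> (\<lambda>_. 1)) \<and> (Q v \<and> (finite {e. Q (v(0 := e))} \<and> card {e. Q (v(0 := e))} \<le> N)))"
  have dT0: "dfn I C (insert 1 {0}) T0" unfolding T0_def
    by (rule dfn_conj[OF f01 dR' dfn_conj[OF f01 dQ dB]])
  have dT: "dfn I C (insert 1 {0} - {1}) (\<lambda>v. \<exists>a. T0 (v(1 := a)))"
    by (rule dfn_ex[OF _ dT0]) simp
  have e01: "insert (1::nat) {0} - {1} = {0}" by auto
  have dT': "dfn I C {0} (\<lambda>v. \<exists>a. T0 (v(1 := a)))" using dT unfolding e01 .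
  define F where "F = (\<lambda>a. {e'. Q ((\<lambda>_. e')(1 := a))})"
  have QF: "Q (((\<lambda>_. e)(1 := a))(0 := e')) = Q ((\<lambda>_. e')(1 := a))" for e e' a
    by (rule dfn_dep[OF dQ]) auto
  have Pc: "P (\<lambda>_. e) = Q ((\<lambda>_. e)(1 := c))" for e using PQ by simp
  have "T0 ((\<lambda>_. b)(1 := c))"
  proof -
    have "((\<lambda>_. b)(1 := c)) \<circ> (\<lambda>_. 1) = (\<lambda>_. c)" by (simp add: fun_eq_iff)
    then have r: "R (((\<lambda>_. b)(1 := c)) \<circ> (\<lambda>_. 1))" using Rc by simp
    have q: "Q ((\<lambda>_. b)(1 := c))" using Pb Pc by simp
    have "{e. Q (((\<lambda>_. b)(1 := c))(0 := e))} = {e. P (\<lambda>_. e)}" using QF Pc by simp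
    then show ?thesis unfolding T0_def N_def using r q fP by simp
  qed
  then have Tb: "\<exists>a. T0 ((\<lambda>_. b)(1 := a))" by blast
  have sub: "{e. \<exists>a. T0 ((\<lambda>_. e)(1 := a))} \<subseteq> (\<Union>a\<in>{a. R (\<lambda>_. a) \<and> finite (F a)}. F a)"
  proof
    fix e assume "e \<in> {e. \<exists>a. T0 ((\<lambda>_. e)(1 := a))}"
    then obtain a where t: "T0 ((\<lambda>_. e)(1 := a))" by blast
    have "((\<lambda>_. e)(1 := a)) \<circ> (\<lambda>_. 1) = (\<lambda>_. a)" by (simp add: fun_eq_iff)
    then have r: "R (\<lambda>_. a)" using t unfolding T0_def by simp
    have fe: "{e'. Q (((\<lambda>_. e)(1 := a))(0 := e'))} = F a" unfolding F_def using QF by simp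
    have fin: "finite (F a)" using t fe unfolding T0_def by simp
    have "e \<in> F a" using t QF[of e a e] unfolding T0_def F_def by simp
    then show "e \<in> (\<Union>a\<in>{a. R (\<lambda>_. a) \<and> finite (F a)}. F a)" using r fin by blast
  qed
  have "finite (\<Union>a\<in>{a. R (\<lambda>_. a) \<and> finite (F a)}. F a)"
    using fR by (intro finite_UN_I) (auto intro: finite_subset[of _ "{e. R (\<lambda>_. e)}"])
  then have "finite {e. \<exists>a. T0 ((\<lambda>_. e)(1 := a))}" using sub finite_subset by blast
  then show ?thesis unfolding acl_iff using dT' Tb by (intro exI[of _ "\<lambda>v. \<exists>a. T0 (v(1 := a))"]) simp
qed

lemma acl_trans_fin:
  assumes "finite B" "B \<subseteq> acl I C" "b \<in> acl I (C \<union> B)"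
  shows "b \<in> acl I C"
  using assms
proof (induction B arbitrary: b rule: finite_induct)
  case empty then show ?case by simp
next
  case (insert c B)
  have "c \<in> acl I (C \<union> B)" using insert.prems(1) acl_mono[of C "C \<union> B"] by blast
  moreover have "b \<in> acl I ((C \<union> B) \<union> {c})" using insert.prems(2) by (simp add: Un_insert_right)
  ultimately have "b \<in> acl I (C \<union> B)" using acl_trans1 by metis
  then show ?case using insert.IH insert.prems(1) by blast
qed

section \<open>Dimension\<close>

lemma dim_over_wit: "\<exists>S\<subseteq>{..<n}. card S = dim_over I n a A \<and> (\<forall>i<n. a i \<in> acl I (A \<union> a ` S))"
proof -
  have ex: "\<exists>S\<subseteq>{..<n}. card S = n \<and> (\<forall>i<n. a i \<in> acl I (A \<union> a ` S))"
    by (rule exI[of _ "{..<n}"]) (auto intro!: acl_base)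
  show ?thesis unfolding dim_over_def by (rule LeastI_ex) (use ex in blast)
qed

lemma dim_over_le: "S \<subseteq> {..<n} \<Longrightarrow> (\<forall>i<n. a i \<in> acl I (A \<union> a ` S)) \<Longrightarrow> dim_over I n a A \<le> card S"
  unfolding dim_over_def by (rule Least_le) blast

lemma dim_over_le_n: "dim_over I n a A \<le> n"
proof -
  have "dim_over I n a A \<le> card {..<n}" by (rule dim_over_le) (auto intro!: acl_base)
  then show ?thesis by simp
qed

lemma dim_over_anti: "A \<subseteq> B \<Longrightarrow> dim_over I n a B \<le> dim_over I n a A"
proof -
  assume AB: "A \<subseteq> B"
  obtain S where S: "S \<subseteq> {..<n}" "card S = dim_over I n a A" "\<forall>i<n. a i \<in> acl I (A \<union> a ` S)"
    using dim_over_wit by blast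
  have "\<forall>i<n. a i \<in> acl I (B \<union> a ` S)" using S(3) acl_mono[of "A \<union> a ` S" "B \<union> a ` S"] AB by blast
  then show ?thesis using dim_over_le[OF S(1)] S(2) by metis
qed

lemma dim_set_finite: "finite {int (dim_over I n a A) | a A. countable A \<and> definable_over I n A X \<and> a \<in> X}"
proof (rule finite_subset)
  show "{int (dim_over I n a A) | a A. countable A \<and> definable_over I n A X \<and> a \<in> X} \<subseteq> {0..int n}"
    using dim_over_le_n by auto
qed simp

lemma dim_ge: "countable A \<Longrightarrow> definable_over I n A X \<Longrightarrow> a \<in> X \<Longrightarrow> int (dim_over I n a A) \<le> dim I n X"
proof -
  assume h: "countable A" "definable_over I n A X" "a \<in> X"
  then have "X \<noteq> {}" by blast
  have mem: "int (dim_over I n a A) \<in> {int (dim_over I n a A) | a A. countable A \<and> definable_over I n A X \<and> a \<in> X}"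
    using h by blast
  have eq: "dim I n X = Max {int (dim_over I n a A) | a A. countable A \<and> definable_over I n A X \<and> a \<in> X}"
    using \<open>X \<noteq> {}\<close> unfolding dim_def by simp
  show ?thesis unfolding eq by (rule Max_ge[OF dim_set_finite mem])
qed

lemma dim_le:
  assumes "definable_over I n A X" "X \<noteq> {}"
    and "\<And>a A'. countable A' \<Longrightarrow> definable_over I n A' X \<Longrightarrow> a \<in> X \<Longrightarrow> dim_over I n a A' \<le> k"
  shows "dim I n X \<le> int k"
proof -
  define D where "D = {int (dim_over I n a A) | a A. countable A \<and> definable_over I n A X \<and> a \<in> X}"
  have fin: "finite D" unfolding D_def by (rule dim_set_finite)
  obtain A0 where A0: "finite A0" "A0 \<subseteq> A" "definable_over I n A0 X" using definable_over_finite[OF assms(1)] by blast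
  obtain a where a: "a \<in> X" using assms(2) by blast
  have "int (dim_over I n a A0) \<in> D" unfolding D_def using A0(3) a countable_finite[OF A0(1)] by blast
  then have ne: "D \<noteq> {}" by blast
  have allle: "\<forall>d\<in>D. d \<le> int k"
  proof
    fix d assume "d \<in> D"
    then obtain a' A' where h: "d = int (dim_over I n a' A')" "countable A'" "definable_over I n A' X" "a' \<in> X"
      unfolding D_def by blast
    show "d \<le> int k" using assms(3)[OF h(2,3,4)] h(1) by simp
  qed
  have eq: "dim I n X = Max D" using assms(2) unfolding dim_def D_def by simp
  show ?thesis unfolding eq using Max_le_iff[OF fin ne] allle by blast
qed

section \<open>Tuples\<close>

lemma Rn_iff: "u \<in> Rn n \<longleftrightarrow> (\<forall>i. n \<le> i \<longrightarrow> u i = undefined)"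
  unfolding Rn_def PiE_iff extensional_def by auto

lemma join_Rn: "join n m u v \<in> Rn (n + m)"
  unfolding Rn_iff join_def by auto

lemma join_lo: "i < n \<Longrightarrow> join n m u v i = u i"
  unfolding join_def by simp

lemma join_hi: "t < m \<Longrightarrow> join n m u v (n + t) = v t"
  unfolding join_def by simp

lemma join_inj:
  assumes "u \<in> Rn n" "v \<in> Rn m" "u' \<in> Rn n" "v' \<in> Rn m" "join n m u v = join n m u' v'"
  shows "u = u' \<and> v = v'"
proof
  show "u = u'"
  proof
    fix i show "u i = u' i"
    proof (cases "i < n")
      case True then show ?thesis using assms(5) join_lo[of i n m] by metis
    next
      case False then show ?thesis using assms(1,3) unfolding Rn_iff by simp
    qed
  qed
  show "v = v'"
  proof
    fix t show "v t = v' t"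
    proof (cases "t < m")
      case True then show ?thesis using assms(5) join_hi[of t m n] by metis
    next
      case False then show ?thesis using assms(2,4) unfolding Rn_iff by simp
    qed
  qed
qed

definition restr :: "nat \<Rightarrow> (nat \<Rightarrow> 'a) \<Rightarrow> (nat \<Rightarrow> 'a)" where
  "restr n u = (\<lambda>i. if i < n then u i else undefined)"

definition shft :: "nat \<Rightarrow> nat \<Rightarrow> (nat \<Rightarrow> 'a) \<Rightarrow> (nat \<Rightarrow> 'a)" where
  "shft n m z = (\<lambda>t. if t < m then z (n + t) else undefined)"

lemma restr_Rn: "restr n u \<in> Rn n" unfolding Rn_iff restr_def by simp
lemma shft_Rn: "shft n m u \<in> Rn m" unfolding Rn_iff shft_def by simp
lemma restr_id: "u \<in> Rn n \<Longrightarrow> restr n u = u" unfolding Rn_iff restr_def by auto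

lemma join_split: "z \<in> Rn (n + m) \<Longrightarrow> z = join n m (restr n z) (shft n m z)"
  unfolding Rn_iff join_def restr_def shft_def by (auto simp: fun_eq_iff)

lemma tprod_Rn: "tprod n m (Rn n) (Rn m) = Rn (n + m)"
  unfolding tprod_def using join_Rn join_split restr_Rn shft_Rn by blast

section \<open>Lore lemmas\<close>

lemma lore_def1: "\<forall>n X. L n X \<longrightarrow> definable I n X" if "lore I \<tau> L"
  using that unfolding lore_def by (elim conjE) assumption

lemma lore_R1: "L 1 (Rn 1)" if "lore I \<tau> L"
  using that unfolding lore_def by (elim conjE) assumption

lemma lore_D2: "L 2 {x \<in> Rn 2. x 0 = x 1}" if "lore I \<tau> L"
  using that unfolding lore_def by (elim conjE) assumption

lemma lore_prod: "\<forall>n m X Y. L n X \<and> L m Y \<longrightarrow> L (n + m) (tprod n m X Y)" if "lore I \<tau> L"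
  using that unfolding lore_def by (elim conjE) assumption

lemma lore_int: "\<forall>n X Y. L n X \<and> L n Y \<longrightarrow> L n (X \<inter> Y)" if "lore I \<tau> L"
  using that unfolding lore_def by (elim conjE) assumption

lemma lore_perm: "\<forall>n X \<sigma>. L n X \<and> \<sigma> permutes {..<n} \<longrightarrow> L n ((\<lambda>x. x \<circ> \<sigma>) ` X)" if "lore I \<tau> L"
  using that unfolding lore_def by (elim conjE) assumption

lemma lore_ii: "\<forall>n m X Y f. L n X \<and> Y \<subseteq> Rn m \<and> L (n + m) (graph n m X f) \<and>
          homeomorphic_map (subtopology (Tn \<tau> n) X) (subtopology (Tn \<tau> m) Y) f \<longrightarrow> L m Y" if "lore I \<tau> L"
  using that unfolding lore_def by (elim conjE) assumption

lemma lore_iii: "\<forall>n X U. L n X \<and> definable I n U \<and> openin (subtopology (Tn \<tau> n) X) U \<longrightarrow> L n U" if "lore I \<tau> L"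
  using that unfolding lore_def by (elim conjE) assumption

lemma lore_iii2: "\<forall>n X. definable I n X \<and>
          (\<forall>x \<in> X. \<exists>U. openin (subtopology (Tn \<tau> n) X) U \<and> x \<in> U \<and> L n U) \<longrightarrow> L n X" if "lore I \<tau> L"
  using that unfolding lore_def by (elim conjE) assumption

lemma lore_iv: "\<forall>n A X. definable_over I n A X \<and> X \<noteq> {} \<longrightarrow>
          (\<exists>X'. openin (subtopology (Tn \<tau> n) X) X' \<and> definable_over I n A X' \<and> L n X' \<and>
                dim I n (X - X') < dim I n X)" if "lore I \<tau> L"
  using that unfolding lore_def by (elim conjE) assumption

lemma lore_definable: "lore I \<tau> L \<Longrightarrow> L n X \<Longrightarrow> definable I n X"
  using lore_def1 by blast

lemma definable_sub: "definable I n X \<Longrightarrow> X \<subseteq> Rn n"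
  unfolding definable_def definable_over_def by blast

lemma Rn0: "Rn 0 = {\<lambda>_. undefined}"
  by (rule set_eqI) (simp add: Rn_iff fun_eq_iff)

lemma definable_Rn: "definable_over I n A (Rn n)"
  unfolding definable_iff using dfn_true by (intro conjI exI[of _ "\<lambda>_. True"]) auto

lemma lore_Rn:
  fixes L :: "nat \<Rightarrow> (nat \<Rightarrow> 'a) set \<Rightarrow> bool"
  assumes lo: "lore I \<tau> L"
  shows "L m (Rn m)"
proof (induction m)
  case 0
  note iv = lore_iv[OF lo]
  obtain X' where X': "openin (subtopology (Tn \<tau> 0) (Rn 0)) X'" "L 0 X'" "dim I 0 (Rn 0 - X') < dim I 0 (Rn 0)"
    using iv[rule_format, of 0 "{}" "Rn 0"] definable_Rn Rn0 by blast
  have sub: "X' \<subseteq> Rn 0" using openin_subset[OF X'(1)] by simp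
  have "X' \<noteq> {}" using X'(3) by auto
  then have "X' = Rn 0" using sub unfolding Rn0 by blast
  then show ?case using X'(2) by simp
next
  case (Suc m)
  have L1: "L 1 (Rn 1)" using lore_R1[OF lo] .
  have "L (m + 1) (tprod m 1 (Rn m) (Rn 1))" using lore_prod[OF lo] Suc L1 by blast
  then show ?case using tprod_Rn[of m 1] by (metis Suc_eq_plus1)
qed

lemma lore_diag01:
  fixes L :: "nat \<Rightarrow> (nat \<Rightarrow> 'a) set \<Rightarrow> bool"
  assumes lo: "lore I \<tau> L" and N: "2 \<le> N"
  shows "L N {z \<in> Rn N. z 0 = z 1}"
proof -
  define D where "D = {z :: nat \<Rightarrow> 'a. z \<in> Rn 2 \<and> z 0 = z 1}"
  have LD: "L 2 D" using lore_D2[OF lo] unfolding D_def by simp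
  have L2: "L (2 + (N - 2)) (tprod 2 (N - 2) D (Rn (N - 2)))" using lore_prod[OF lo] LD lore_Rn[OF lo] by blast
  have NN0: "2 + (N - 2) = N" using N by simp
  have eqT:  "tprod 2 (N - 2) D (Rn (N - 2)) = {z \<in> Rn N. z 0 = z 1}"
  proof
    show "tprod 2 (N - 2) D (Rn (N - 2)) \<subseteq> {z \<in> Rn N. z 0 = z 1}"
    proof
      fix z assume "z \<in> tprod 2 (N - 2) D (Rn (N - 2))"
      then obtain u v where uv: "u \<in> D" "z = join 2 (N - 2) u v" unfolding tprod_def by blast
      have NN: "2 + (N - 2) = N" using N by simp
      have "z \<in> Rn N" using join_Rn[of 2 "N - 2" u v] uv(2) unfolding NN by simp
      moreover have "z 0 = z 1" using uv unfolding D_def join_def by simp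
      ultimately show "z \<in> {z \<in> Rn N. z 0 = z 1}" by blast
    qed
    show "{z \<in> Rn N. z 0 = z 1} \<subseteq> tprod 2 (N - 2) D (Rn (N - 2))"
    proof
      fix z :: "nat \<Rightarrow> 'a" assume z: "z \<in> {z \<in> Rn N. z 0 = z 1}"
      have NN: "2 + (N - 2) = N" using N by simp
      have zR: "z \<in> Rn (2 + (N - 2))" unfolding NN using z by simp
      have "restr 2 z \<in> D" using z restr_Rn unfolding D_def restr_def by simp
      then show "z \<in> tprod 2 (N - 2) D (Rn (N - 2))"
        unfolding tprod_def using join_split[OF zR] shft_Rn by blast
    qed
  qed
  show ?thesis using L2 unfolding NN0 eqT .
qed

lemma perm01:
  fixes a b N :: nat
  assumes "a < N" "b < N" "a \<noteq> b" "2 \<le> N"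
  shows "\<exists>\<sigma>. \<sigma> permutes {..<N} \<and> \<sigma> a = 0 \<and> \<sigma> b = 1"
proof -
  define b' where "b' = Transposition.transpose a 0 b"
  have b'0: "b' \<noteq> 0" using assms(3) unfolding b'_def by (auto simp: Transposition.transpose_def)
  have p1: "Transposition.transpose a 0 permutes {..<N}" using assms by (intro permutes_swap_id) auto
  have b'N: "b' < N" using assms unfolding b'_def by (auto simp: Transposition.transpose_def)
  have p2: "Transposition.transpose b' 1 permutes {..<N}" using assms b'N by (intro permutes_swap_id) auto
  have "Transposition.transpose b' 1 \<circ> Transposition.transpose a 0 permutes {..<N}" by (rule permutes_compose[OF p1 p2])
  moreover have "(Transposition.transpose b' 1 \<circ> Transposition.transpose a 0) a = 0" using b'0 by (simp add: Transposition.transpose_def)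
  moreover have "(Transposition.transpose b' 1 \<circ> Transposition.transpose a 0) b = 1" unfolding b'_def by (simp add: Transposition.transpose_def)
  ultimately show ?thesis by blast
qed

lemma lore_diag:
  fixes L :: "nat \<Rightarrow> (nat \<Rightarrow> 'a) set \<Rightarrow> bool"
  assumes lo: "lore I \<tau> L" and ab: "a < N" "b < N" "a \<noteq> b"
  shows "L N {z \<in> Rn N. z a = z b}"
proof -
  have N: "2 \<le> N" using ab by linarith
  obtain \<sigma> where \<sigma>: "\<sigma> permutes {..<N}" "\<sigma> a = 0" "\<sigma> b = 1" using perm01[OF ab N] by blast
  have L0: "L N {z \<in> Rn N. z 0 = z 1}" by (rule lore_diag01[OF lo N])
  have Li: "L N ((\<lambda>x. x \<circ> \<sigma>) ` {z \<in> Rn N. z 0 = z 1})" using lore_perm[OF lo] L0 \<sigma>(1) by blast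
  have eq: "(\<lambda>x. x \<circ> \<sigma>) ` {z \<in> Rn N. z 0 = z 1} = {z \<in> Rn N. z a = z b}"
  proof
    show "(\<lambda>x. x \<circ> \<sigma>) ` {z \<in> Rn N. z 0 = z 1} \<subseteq> {z \<in> Rn N. z a = z b}"
    proof
      fix w assume "w \<in> (\<lambda>x. x \<circ> \<sigma>) ` {z \<in> Rn N. z 0 = z 1}"
      then obtain z where z: "z \<in> Rn N" "z 0 = z 1" "w = z \<circ> \<sigma>" by blast
      have "w \<in> Rn N" unfolding Rn_iff
      proof (intro allI impI)
        fix i assume "N \<le> i"
        then have "\<sigma> i = i" using permutes_not_in[OF \<sigma>(1)] by simp
        then show "w i = undefined" using z(1) \<open>N \<le> i\<close> unfolding z(3) Rn_iff by simp
      qed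
      moreover have "w a = w b" using z \<sigma> by simp
      ultimately show "w \<in> {z \<in> Rn N. z a = z b}" by blast
    qed
    show "{z \<in> Rn N. z a = z b} \<subseteq> (\<lambda>x. x \<circ> \<sigma>) ` {z \<in> Rn N. z 0 = z 1}"
    proof
      fix w assume w: "w \<in> {z \<in> Rn N. z a = z b}"
      define z where "z = w \<circ> inv \<sigma>"
      have ip: "inv \<sigma> permutes {..<N}" using permutes_inv[OF \<sigma>(1)] .
      have "z \<in> Rn N" unfolding Rn_iff
      proof (intro allI impI)
        fix i assume "N \<le> i"
        then have "inv \<sigma> i = i" using permutes_not_in[OF ip] by simp
        then show "z i = undefined" using w \<open>N \<le> i\<close> unfolding z_def Rn_iff by simp
      qed
      moreover have "inv \<sigma> 0 = a" "inv \<sigma> 1 = b" using \<sigma> permutes_inverses(2)[OF \<sigma>(1)] by metis+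
      then have "z 0 = z 1" using w unfolding z_def by simp
      moreover have "w = z \<circ> \<sigma>" unfolding z_def using permutes_inverses(2)[OF \<sigma>(1)] by (auto simp: fun_eq_iff)
      ultimately show "w \<in> (\<lambda>x. x \<circ> \<sigma>) ` {z \<in> Rn N. z 0 = z 1}" by blast
    qed
  qed
  show ?thesis using Li unfolding eq .
qed

lemma lore_inter_diag:
  fixes L :: "nat \<Rightarrow> (nat \<Rightarrow> 'a) set \<Rightarrow> bool"
  assumes lo: "lore I \<tau> L" and LB: "L N B" and K: "finite K"
    and ab: "\<And>t. t \<in> K \<Longrightarrow> a t < N \<and> b t < N \<and> a t \<noteq> b t"
  shows "L N (B \<inter> {z \<in> Rn N. \<forall>t\<in>K. z (a t) = z (b t)})"
  using K ab
proof (induction K rule: finite_induct)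
  case empty
  have "B \<subseteq> Rn N" using definable_sub[OF lore_definable[OF lo LB]] .
  then have "B \<inter> {z \<in> Rn N. \<forall>t\<in>{}. z (a t) = z (b t)} = B" by auto
  then show ?case using LB by simp
next
  case (insert t K)
  have h: "a t < N \<and> b t < N \<and> a t \<noteq> b t" by (rule insert.prems) simp
  have "L N (B \<inter> {z \<in> Rn N. \<forall>t\<in>K. z (a t) = z (b t)})" by (rule insert.IH) (rule insert.prems, simp)
  moreover have "L N {z \<in> Rn N. z (a t) = z (b t)}" using lore_diag[OF lo] h by blast
  ultimately have "L N ((B \<inter> {z \<in> Rn N. \<forall>t\<in>K. z (a t) = z (b t)}) \<inter> {z \<in> Rn N. z (a t) = z (b t)})"
    using lore_int[OF lo] by blast
  moreover have "(B \<inter> {z \<in> Rn N. \<forall>t\<in>K. z (a t) = z (b t)}) \<inter> {z \<in> Rn N. z (a t) = z (b t)} =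
      B \<inter> {z \<in> Rn N. \<forall>t\<in>insert t K. z (a t) = z (b t)}" by blast
  ultimately show ?case by simp
qed

section \<open>Topology\<close>

lemma Tn_topspace: "topspace \<tau> = UNIV \<Longrightarrow> topspace (Tn \<tau> n) = Rn n"
  unfolding Tn_def Rn_def by simp

lemma box:
  assumes tm: "t_minimal I \<tau>" and Op: "openin (Tn \<tau> n) Op" and x: "x \<in> Op"
  shows "\<exists>B. x \<in> B \<and> B \<subseteq> Op \<and> openin (Tn \<tau> n) B \<and> definable I n B"
proof -
  obtain \<phi> where \<phi>1: "\<forall>p. openin \<tau> {c. sat I (p(0 := c)) \<phi>}"
    and \<phi>2: "\<forall>U a. openin \<tau> U \<and> a \<in> U \<longrightarrow> (\<exists>p. a \<in> {c. sat I (p(0 := c)) \<phi>} \<and> {c. sat I (p(0 := c)) \<phi>} \<subseteq> U)"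
    using tm unfolding t_minimal_def by blast
  obtain U where U: "\<forall>i \<in> {..<n}. openin \<tau> (U i)" "x \<in> Pi\<^sub>E {..<n} U" "Pi\<^sub>E {..<n} U \<subseteq> Op"
    using Op x unfolding Tn_def openin_product_topology_alt by blast
  have ex: "\<forall>i\<in>{..<n}. \<exists>p. x i \<in> {c. sat I (p(0 := c)) \<phi>} \<and> {c. sat I (p(0 := c)) \<phi>} \<subseteq> U i"
  proof
    fix i assume i: "i \<in> {..<n}"
    have "openin \<tau> (U i)" using U(1) i by blast
    moreover have "x i \<in> U i" using U(2) i by (rule PiE_mem)
    ultimately show "\<exists>p. x i \<in> {c. sat I (p(0 := c)) \<phi>} \<and> {c. sat I (p(0 := c)) \<phi>} \<subseteq> U i"
      using \<phi>2 by blast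
  qed
  obtain pp where pp: "\<forall>i\<in>{..<n}. x i \<in> {c. sat I ((pp i)(0 := c)) \<phi>} \<and> {c. sat I ((pp i)(0 := c)) \<phi>} \<subseteq> U i"
    using bchoice[OF ex] by blast
  define B where "B = Pi\<^sub>E {..<n} (\<lambda>i. {c. sat I ((pp i)(0 := c)) \<phi>})"
  have xe: "x \<in> extensional {..<n}" using U(2) by (simp add: PiE_iff)
  have xB: "x \<in> B" unfolding B_def PiE_iff using pp xe by blast
  have "B \<subseteq> Pi\<^sub>E {..<n} U" unfolding B_def by (rule PiE_mono) (use pp in blast)
  then have BO: "B \<subseteq> Op" using U(3) by blast
  have oB: "openin (Tn \<tau> n) B" unfolding Tn_def B_def
    by (subst openin_PiE) (simp_all add: \<phi>1)
  define P where "P = (\<lambda>v::nat \<Rightarrow> _. \<forall>i\<in>{..<n}. sat I ((pp i)(0 := v i)) \<phi>)"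
  have dP: "dfn I UNIV {..<n} P" unfolding P_def
  proof (rule dfn_conj_fin, simp, simp)
    fix i assume i: "i \<in> {..<n}"
    have e: "(\<lambda>j. if j \<in> {0} then v j else pp i j) = (pp i)(0 := v 0)" for v :: "nat \<Rightarrow> _"
      by (auto simp: fun_eq_iff)
    have d0: "dfn I UNIV {0} (\<lambda>v. sat I ((pp i)(0 := v 0)) \<phi>)" unfolding dfn_iff_fm
      by (rule exI[of _ \<phi>], rule exI[of _ "pp i"]) (use e in simp)
    have "dfn I UNIV {..<n} (\<lambda>v. sat I ((pp i)(0 := v i)) \<phi>)"
      using dfn_subst[OF _ _ _ d0, of "{..<n}" "\<lambda>_. i"] i by (simp add: comp_def)
    then show "dfn I UNIV {..<n} (\<lambda>v. sat I ((pp i)(0 := v i)) \<phi>)" by simp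
  qed
  have "B = {v \<in> Rn n. P v}" unfolding B_def P_def Rn_def by (rule set_eqI) (simp add: PiE_iff conj_commute)
  moreover have "B \<subseteq> Rn n" unfolding B_def Rn_def by (rule PiE_mono) auto
  ultimately have "definable I n B" unfolding definable_def definable_iff using dP by blast
  then show ?thesis using xB BO oB by blast
qed

lemma dfn_param_abs_multi:
  "dfn I (A \<union> c ` {..<k}) {0} P \<Longrightarrow> \<exists>Q. dfn I A {..k} Q \<and> (\<forall>v. P v = Q (\<lambda>i. if 0 < i \<and> i \<le> k then c (i - 1) else v i))"
proof (induction k arbitrary: A P)
  case 0
  have "(\<lambda>i. if 0 < i \<and> i \<le> (0::nat) then c (i - 1) else v i) = v" for v by (auto simp: fun_eq_iff)
  moreover have "dfn I A {..0} P" using 0 by (simp add: atMost_0)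
  ultimately show ?case by (intro exI[of _ P]) simp
next
  case (Suc k)
  have e: "A \<union> c ` {..<Suc k} = (A \<union> {c k}) \<union> c ` {..<k}" by (auto simp: lessThan_Suc)
  obtain Q1 where Q1: "dfn I (A \<union> {c k}) {..k} Q1" "\<forall>v. P v = Q1 (\<lambda>i. if 0 < i \<and> i \<le> k then c (i - 1) else v i)"
    using Suc.IH[of "A \<union> {c k}" P] Suc.prems unfolding e by blast
  obtain Q2 where Q2: "dfn I A (insert (Suc k) {..k}) Q2" "\<forall>v. Q1 v = Q2 (v(Suc k := c k))"
    using dfn_param_abs[of "{..k}" "Suc k" I A "c k" Q1] Q1(1) by auto
  have e2: "insert (Suc k) {..k} = {..Suc k}" by auto
  have e3: "(\<lambda>i. if 0 < i \<and> i \<le> k then c (i - 1) else v i)(Suc k := c k) = (\<lambda>i. if 0 < i \<and> i \<le> Suc k then c (i - 1) else v i)" for v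
    by (auto simp: fun_eq_iff)
  have "P v = Q2 (\<lambda>i. if 0 < i \<and> i \<le> Suc k then c (i - 1) else v i)" for v
  proof -
    have "P v = Q1 (\<lambda>i. if 0 < i \<and> i \<le> k then c (i - 1) else v i)" using Q1(2) by blast
    also have "\<dots> = Q2 ((\<lambda>i. if 0 < i \<and> i \<le> k then c (i - 1) else v i)(Suc k := c k))" using Q2(2) by blast
    also have "\<dots> = Q2 (\<lambda>i. if 0 < i \<and> i \<le> Suc k then c (i - 1) else v i)" by (simp only: e3)
    finally show ?thesis .
  qed
  then show ?case using Q2(1) unfolding e2 by blast
qed

lemma join_comp:
  assumes "join n m u v = join n m u' v'"
  shows "\<forall>i<n. u i = u' i" "\<forall>t<m. v t = v' t"
proof -
  show "\<forall>i<n. u i = u' i"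
  proof (intro allI impI)
    fix i assume i: "i < n"
    have "join n m u v i = join n m u' v' i" using assms by simp
    then show "u i = u' i" using join_lo[OF i, of m u v] join_lo[OF i, of m u' v'] by argo
  qed
  show "\<forall>t<m. v t = v' t"
  proof (intro allI impI)
    fix t assume t: "t < m"
    have "join n m u v (n + t) = join n m u' v' (n + t)" using assms by simp
    then show "v t = v' t" using join_hi[OF t, of n u v] join_hi[OF t, of n u' v'] by argo
  qed
qed

lemma fiber_acl:
  fixes Z :: "(nat \<Rightarrow> 'a) set"
  assumes dZ': "definable_over I (n + k) A' Z" and zZ: "z \<in> Z" and i: "i < n"
    and fin: "finite {u \<in> Rn n. join n k u (shft n k z) \<in> Z}"
  shows "z i \<in> acl I (A' \<union> z ` {n..<n + k})"
proof -
  obtain PZ where dPZ: "dfn I A' {..<n + k} PZ" and Ze: "Z = {z \<in> Rn (n + k). PZ z}"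
    using dZ' unfolding definable_iff by blast
  define B' where "B' = A' \<union> z ` {n..<n + k}"
  define Y0 where "Y0 = {n..<n + k}"
  have d0: "dfn I B' {..<n + k} PZ" using dfn_mono_A[OF dPZ] unfolding B'_def by blast
  have dQ1': "dfn I B' ({..<n + k} - Y0) (\<lambda>v. PZ (\<lambda>j. if j \<in> Y0 then z j else v j))"
    by (rule dfn_inst[OF _ _ _ d0]) (auto simp: Y0_def B'_def)
  have e1: "{..<n + k} - Y0 = {..<n}" unfolding Y0_def by auto
  define Q1 where "Q1 = (\<lambda>v. PZ (\<lambda>j. if j \<in> Y0 then z j else v j))"
  have dQ1: "dfn I B' {..<n} Q1" using dQ1' unfolding e1 Q1_def .
  have dQ2: "dfn I B' {..n} (\<lambda>v. Q1 (v \<circ> Suc))"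
    by (rule dfn_subst[OF _ _ _ dQ1]) auto
  have dQ3: "dfn I B' {..n} (\<lambda>v. Q1 (v \<circ> Suc) \<and> v 0 = v (Suc i))"
    by (rule dfn_conj[OF _ dQ2 dfn_eq]) (use i in auto)
  define Q3 where "Q3 = (\<lambda>v. Q1 (v \<circ> Suc) \<and> v 0 = v (Suc i))"
  have dR': "dfn I B' ({..n} - {1..n}) (\<lambda>v. \<exists>w. Q3 (\<lambda>j. if j \<in> {1..n} then w j else v j))"
    by (rule dfn_exs[OF _ _ dQ3[folded Q3_def]]) auto
  have e2: "{..n} - {1..n} = {0::nat}" by auto
  define R where "R = (\<lambda>v. \<exists>w. Q3 (\<lambda>j. if j \<in> {1..n} then w j else v j))"
  have dR: "dfn I B' {0} R" using dR' unfolding e2 R_def .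
  have Q1dep: "Q1 v = Q1 v'" if "\<forall>j<n. v j = v' j" for v v'
    by (rule dfn_dep[OF dQ1]) (use that in simp)
  have PZdep: "PZ v = PZ v'" if "\<forall>j<n + k. v j = v' j" for v v'
    by (rule dfn_dep[OF dPZ]) (use that in simp)
  have zR: "z \<in> Rn (n + k)" and PZz: "PZ z" using zZ Ze by auto
  have Rz: "R (\<lambda>_. z i)"
  proof -
    define u where "u = (\<lambda>j. if j \<in> {1..n} then z (j - 1) else z i)"
    have "Q1 (u \<circ> Suc) = Q1 z" by (rule Q1dep) (auto simp: u_def)
    moreover have "Q1 z = PZ z" unfolding Q1_def by (rule PZdep) simp
    moreover have "u 0 = u (Suc i)" using i unfolding u_def by simp
    ultimately have "Q3 u" unfolding Q3_def using PZz by simp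
    then show ?thesis unfolding R_def u_def by (rule exI[of _ "\<lambda>j. z (j - 1)"])
  qed
  define Fib where "Fib = {u \<in> Rn n. join n k u (shft n k z) \<in> Z}"
  have sub: "{e. R (\<lambda>_. e)} \<subseteq> (\<lambda>u. u i) ` Fib"
  proof
    fix e assume "e \<in> {e. R (\<lambda>_. e)}"
    then obtain w where w: "Q3 (\<lambda>j. if j \<in> {1..n} then w j else e)" unfolding R_def by blast
    define u where "u = (\<lambda>j. if j \<in> {1..n} then w j else e)"
    have q1: "Q1 (u \<circ> Suc)" and q2: "u 0 = u (Suc i)" using w unfolding Q3_def u_def by auto
    define u' where "u' = restr n (u \<circ> Suc)"
    define z' where "z' = join n k u' (shft n k z)"
    have "PZ z' = Q1 (u \<circ> Suc)" unfolding Q1_def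
    proof (rule PZdep, intro allI impI)
      fix j assume j: "j < n + k"
      show "z' j = (if j \<in> Y0 then z j else (u \<circ> Suc) j)"
      proof (cases "j < n")
        case True
        then show ?thesis unfolding z'_def u'_def Y0_def by (simp add: join_lo restr_def)
      next
        case False
        then have j2: "j - n < k" "j = n + (j - n)" using j by auto
        have "z' j = shft n k z (j - n)" unfolding z'_def using join_hi[OF j2(1), of n u' "shft n k z"] j2(2) by simp
        also have "\<dots> = z j" unfolding shft_def using j2 by simp
        finally show ?thesis using False j unfolding Y0_def by simp
      qed
    qed
    then have "z' \<in> Z" using q1 Ze join_Rn unfolding z'_def by simp
    then have "u' \<in> Fib" unfolding Fib_def z'_def using restr_Rn unfolding u'_def by blast
    moreover have "u' i = e"
    proof -
      have "u' i = u (Suc i)" unfolding u'_def restr_def using i by simp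
      also have "\<dots> = u 0" using q2 by simp
      also have "\<dots> = e" unfolding u_def by simp
      finally show ?thesis .
    qed
    ultimately show "e \<in> (\<lambda>u. u i) ` Fib" by blast
  qed
  have "finite {e. R (\<lambda>_. e)}" using finite_subset[OF sub] fin unfolding Fib_def by simp
  then show ?thesis unfolding acl_iff B'_def[symmetric] using dR Rz by blast
qed

theorem lemma2p17:
  fixes I :: "'r \<Rightarrow> 'a list \<Rightarrow> bool" and \<tau> :: "'a topology"
    and L :: "nat \<Rightarrow> (nat \<Rightarrow> 'a) set \<Rightarrow> bool"
    and n :: nat and A :: "'a set" and X :: "(nat \<Rightarrow> 'a) set" and x :: "nat \<Rightarrow> 'a"
  assumes "t_minimal I \<tau>"
    and "lore I \<tau> L"
    and "definable_over I n A X"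
    and "generic I n X x A"
  shows "x \<in> lman I \<tau> L n X"
proof -
  note tm = assms(1) and lo = assms(2) and dX = assms(3) and gen = assms(4)
  have hg: "hausdorff_geometric I \<tau>" using tm unfolding t_minimal_def by (elim conjE) assumption
  note hgd = hg[unfolded hausdorff_geometric_def]
  have top: "topspace \<tau> = UNIV" using hgd by (elim conjE) assumption
  note h5 = hgd[THEN conjunct2, THEN conjunct2, THEN conjunct2, THEN conjunct2, THEN conjunct2, THEN conjunct2]
  have xX: "x \<in> X" using gen unfolding generic_def by simp
  have dimx: "int (dim_over I n x A) = dim I n X" using gen unfolding generic_def by simp
  define k where "k = dim_over I n x A"
  have XR: "X \<subseteq> Rn n" using dX unfolding definable_over_def by blast
  obtain PX where dPX: "dfn I A {..<n} PX" and Xe: "X = {x \<in> Rn n. PX x}" using dX unfolding definable_iff by blast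

  obtain X' where X'o: "openin (subtopology (Tn \<tau> n) X) X'" and dX': "definable_over I n A X'"
    and LX': "L n X'" and dimX': "dim I n (X - X') < dim I n X"
    using lore_iv[OF lo, rule_format, of n A X] dX xX by blast
  have xX': "x \<in> X'"
  proof (rule ccontr)
    assume nx: "x \<notin> X'"
    obtain PX' where dPX': "dfn I A {..<n} PX'" and X'e: "X' = {x \<in> Rn n. PX' x}"
      using dX' unfolding definable_iff by blast
    have dXX: "definable_over I n A (X - X')" unfolding definable_iff
    proof (intro conjI exI)
      show "X - X' \<subseteq> Rn n" using XR by blast
      show "dfn I A {..<n} (\<lambda>v. PX v \<and> \<not> PX' v)" by (rule dfn_conj[OF _ dPX dfn_neg[OF dPX']]) simp
      show "X - X' = {x \<in> Rn n. PX x \<and> \<not> PX' x}" using Xe X'e by blast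
    qed
    obtain A0 where A0: "finite A0" "A0 \<subseteq> A" "definable_over I n A0 (X - X')"
      using definable_over_finite[OF dXX] by blast
    have "int (dim_over I n x A0) \<le> dim I n (X - X')"
      using dim_ge[OF countable_finite[OF A0(1)] A0(3)] xX nx by blast
    moreover have "dim_over I n x A \<le> dim_over I n x A0" using dim_over_anti[OF A0(2)] .
    ultimately show False using dimX' dimx by linarith
  qed

  obtain S where S: "S \<subseteq> {..<n}" "card S = k" "\<forall>i<n. x i \<in> acl I (A \<union> x ` S)"
    using dim_over_wit unfolding k_def by blast
  have fS: "finite S" using S(1) finite_subset by blast
  obtain s where s0: "bij_betw s {0..<card S} S" using ex_bij_betw_nat_finite[OF fS] by blast
  have sb: "bij_betw s {..<k} S" using s0 S(2) by (simp add: atLeast0LessThan)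
  have s_img: "s ` {..<k} = S" using sb unfolding bij_betw_def by blast
  have s_inj: "inj_on s {..<k}" using sb unfolding bij_betw_def by blast
  have s_in: "s t \<in> S" if "t < k" for t using s_img that by blast
  have s_lt: "s t < n" if "t < k" for t using s_in[OF that] S(1) by blast
  define prj where "prj = (\<lambda>u::nat \<Rightarrow> 'a. \<lambda>t. if t < k then u (s t) else undefined)"
  define y where "y = prj x"
  have prjR: "prj u \<in> Rn k" for u unfolding prj_def Rn_iff by simp
  have y_t: "y t = x (s t)" if "t < k" for t using that unfolding y_def prj_def by simp
  have xS: "x ` S = y ` {..<k}"
  proof -
    have "x ` S = x ` (s ` {..<k})" using s_img by simp
    also have "\<dots> = y ` {..<k}" using y_t by (auto simp: image_iff)
    finally show ?thesis .
  qed

  have dimY: "dim I k (Rn k) = int k"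
  proof (rule antisym)
    have ne: "Rn k \<noteq> ({} :: (nat \<Rightarrow> 'a) set)" using prjR[of x] by blast
    have le: "dim_over I k a A' \<le> k" for a A'
    proof -
      have "dim_over I k a A' \<le> card {..<k}" by (rule dim_over_le) (auto intro!: acl_base)
      then show ?thesis by simp
    qed
    show "dim I k (Rn k) \<le> int k" by (rule dim_le[OF definable_Rn ne le])
    show "int k \<le> dim I k (Rn k)"
    proof -
      obtain T where T: "T \<subseteq> {..<k}" "card T = dim_over I k y {}" "\<forall>t<k. y t \<in> acl I ({} \<union> y ` T)"
        using dim_over_wit by blast
      have fT: "finite T" using T(1) finite_subset by blast
      have yT: "y ` T = x ` (s ` T)"
      proof -
        have "y ` T = (\<lambda>t. x (s t)) ` T" by (rule image_cong) (use T(1) y_t in auto)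
        then show ?thesis by (simp add: image_image)
      qed
      have B: "x ` S \<subseteq> acl I (A \<union> y ` T)"
      proof
        fix e assume e: "e \<in> x ` S"
        have "e \<in> y ` {..<k}" using xS e by simp
        then obtain t where t: "t < k" "e = y t" by blast
        have "y t \<in> acl I ({} \<union> y ` T)" using T(3) t(1) by blast
        then show "e \<in> acl I (A \<union> y ` T)" using t(2) acl_mono[of "{} \<union> y ` T" "A \<union> y ` T"] by blast
      qed
      have all: "\<forall>i<n. x i \<in> acl I (A \<union> x ` (s ` T))"
      proof (intro allI impI)
        fix i assume i: "i < n"
        have "x i \<in> acl I ((A \<union> y ` T) \<union> x ` S)"
          using S(3) i acl_mono[of "A \<union> x ` S" "(A \<union> y ` T) \<union> x ` S"] by blast
        then have "x i \<in> acl I (A \<union> y ` T)" using acl_trans_fin[OF finite_imageI[OF fS] B] by blast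
        then show "x i \<in> acl I (A \<union> x ` (s ` T))" using yT by simp
      qed
      have sT: "s ` T \<subseteq> {..<n}" using T(1) s_lt by auto
      have "k \<le> card (s ` T)" using dim_over_le[OF sT all] unfolding k_def .
      also have "\<dots> \<le> card T" using card_image_le[OF fT] .
      finally have "k \<le> dim_over I k y {}" using T(2) by simp
      moreover have "int (dim_over I k y {}) \<le> dim I k (Rn k)"
        by (rule dim_ge[OF _ definable_Rn]) (simp_all add: prjR y_def)
      ultimately show ?thesis by linarith
    qed
  qed
  define J where "J = {..<n} - S"
  have fJ: "finite J" unfolding J_def by simp
  define c where "c = (\<lambda>t. x (s t))"
  have cS: "A \<union> x ` S = A \<union> c ` {..<k}"
  proof -
    have "x ` S = c ` {..<k}" unfolding c_def using s_img by (simp add: image_image[symmetric])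
    then show ?thesis by simp
  qed
  have exE: "\<forall>j\<in>J. \<exists>E. dfn I A {..k} E \<and> E (\<lambda>i. if 0 < i \<and> i \<le> k then c (i - 1) else x j) \<and>
                finite {e. E (\<lambda>i. if 0 < i \<and> i \<le> k then c (i - 1) else e)}"
  proof
    fix j assume j: "j \<in> J"
    then have jn: "j < n" unfolding J_def by blast
    have "x j \<in> acl I (A \<union> x ` S)" using S(3) jn by blast
    then have "x j \<in> acl I (A \<union> c ` {..<k})" unfolding cS .
    then obtain P where dP: "dfn I (A \<union> c ` {..<k}) {0} P" and fP: "finite {e. P (\<lambda>_. e)}" and Pj: "P (\<lambda>_. x j)"
      unfolding acl_iff by blast
    obtain E where dE: "dfn I A {..k} E" and PE: "\<forall>v. P v = E (\<lambda>i. if 0 < i \<and> i \<le> k then c (i - 1) else v i)"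
      using dfn_param_abs_multi[OF dP] by blast
    have e1: "E (\<lambda>i. if 0 < i \<and> i \<le> k then c (i - 1) else x j)" using Pj PE by simp
    have "{e. E (\<lambda>i. if 0 < i \<and> i \<le> k then c (i - 1) else e)} = {e. P (\<lambda>_. e)}" using PE by simp
    then have e2: "finite {e. E (\<lambda>i. if 0 < i \<and> i \<le> k then c (i - 1) else e)}" using fP by simp
    show "\<exists>E. dfn I A {..k} E \<and> E (\<lambda>i. if 0 < i \<and> i \<le> k then c (i - 1) else x j) \<and>
                finite {e. E (\<lambda>i. if 0 < i \<and> i \<le> k then c (i - 1) else e)}"
      using dE e1 e2 by blast
  qed
  obtain E where E: "\<forall>j\<in>J. dfn I A {..k} (E j) \<and> E j (\<lambda>i. if 0 < i \<and> i \<le> k then c (i - 1) else x j) \<and>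
                finite {e. E j (\<lambda>i. if 0 < i \<and> i \<le> k then c (i - 1) else e)}"
    using bchoice[OF exE] by blast
  define Nn where "Nn = (\<lambda>j. card {e. E j (\<lambda>i. if 0 < i \<and> i \<le> k then c (i - 1) else e)})"
  define F where "F = (\<lambda>j v. E j v \<and> (finite {e. E j (v(0 := e))} \<and> card {e. E j (v(0 := e))} \<le> Nn j))"
  have dE: "dfn I A {..k} (E j)" if "j \<in> J" for j using E that by blast
  have dF: "dfn I A {..k} (F j)" if j: "j \<in> J" for j
  proof -
    have "dfn I A {..k} (\<lambda>v. E j v \<and> (finite {e. E j (v(0 := e))} \<and> card {e. E j (v(0 := e))} \<le> Nn j))"
      by (rule dfn_conj[OF finite_atMost dE[OF j] dfn_atmost[OF finite_atMost _ dE[OF j]]]) simp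
    then show ?thesis unfolding F_def .
  qed
  define g where "g = (\<lambda>j i. if i = 0 then j else s (i - 1))"
  have g_lt: "g j i < n" if "j < n" "i \<in> {..k}" for j i
  proof (cases "i = 0")
    case True then show ?thesis using that unfolding g_def by simp
  next
    case False then have "i - 1 < k" using that(2) by auto
    then show ?thesis using s_lt False unfolding g_def by simp
  qed
  have Jn: "j < n" if "j \<in> J" for j using that unfolding J_def by blast
  have Fdep: "F j (u \<circ> g j) = F j (u' \<circ> g j)" if j: "j \<in> J" and uu: "\<forall>i<n. u i = u' i" for j u u'
  proof (rule dfn_dep[OF dF[OF j]])
    fix i assume "i \<in> {..k}"
    then have "g j i < n" using g_lt Jn[OF j] by blast
    then show "(u \<circ> g j) i = (u' \<circ> g j) i" using uu by simp
  qed
  have PXdep: "PX u = PX u'" if "\<forall>i<n. u i = u' i" for u u'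
    by (rule dfn_dep[OF dPX]) (use that in simp)
  define Pz where "Pz = (\<lambda>z::nat \<Rightarrow> 'a. PX z \<and> ((\<forall>t\<in>{..<k}. z (n + t) = z (s t)) \<and> (\<forall>j\<in>J. F j (z \<circ> g j))))"
  have dPz: "dfn I A {..<n + k} Pz"
  proof -
    have f: "finite {..<n + k}" by simp
    have d1: "dfn I A {..<n + k} PX" by (rule dfn_mono_V[OF f _ dPX]) auto
    have d2: "dfn I A {..<n + k} (\<lambda>z. \<forall>t\<in>{..<k}. z (n + t) = z (s t))"
    proof (rule dfn_conj_fin[OF f], simp)
      fix t assume t: "t \<in> {..<k}"
      have "s t < n" using s_lt t by simp
      then have "n + t \<in> {..<n + k}" "s t \<in> {..<n + k}" using t by auto
      then show "dfn I A {..<n + k} (\<lambda>z. z (n + t) = z (s t))" by (rule dfn_eq)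
    qed
    have d3: "dfn I A {..<n + k} (\<lambda>z. \<forall>j\<in>J. F j (z \<circ> g j))"
    proof (rule dfn_conj_fin[OF f fJ])
      fix j assume j: "j \<in> J"
      have "g j ` {..k} \<subseteq> {..<n + k}" using g_lt Jn[OF j] by fastforce
      then show "dfn I A {..<n + k} (\<lambda>z. F j (z \<circ> g j))" by (rule dfn_subst[OF finite_atMost f _ dF[OF j]])
    qed
    show ?thesis unfolding Pz_def by (rule dfn_conj[OF f d1 dfn_conj[OF f d2 d3]])
  qed
  define Z where "Z = {z \<in> Rn (n + k). Pz z}"
  have dZ: "definable_over I (n + k) A Z" unfolding definable_iff Z_def using dPz by blast
  have zchar: "z \<in> Z \<longleftrightarrow> (\<exists>u. u \<in> X \<and> (\<forall>j\<in>J. F j (u \<circ> g j)) \<and> z = join n k u (prj u))" for z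
  proof
    assume z: "z \<in> Z"
    then have zR: "z \<in> Rn (n + k)" and Pzz: "Pz z" unfolding Z_def by auto
    define u where "u = restr n z"
    have uz: "\<forall>i<n. u i = z i" unfolding u_def restr_def by simp
    have "PX u" using Pzz PXdep[OF uz] unfolding Pz_def by simp
    then have uX: "u \<in> X" using Xe restr_Rn unfolding u_def by blast
    have uF: "\<forall>j\<in>J. F j (u \<circ> g j)" using Pzz Fdep uz unfolding Pz_def by blast
    have "shft n k z = prj u"
    proof
      fix t show "shft n k z t = prj u t"
      proof (cases "t < k")
        case True
        then have "z (n + t) = z (s t)" using Pzz unfolding Pz_def by simp
        then show ?thesis using True s_lt[OF True] unfolding shft_def prj_def u_def restr_def by simp
      next
        case False then show ?thesis unfolding shft_def prj_def by simp
      qed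
    qed
    then have "z = join n k u (prj u)" using join_split[OF zR] unfolding u_def by simp
    then show "\<exists>u. u \<in> X \<and> (\<forall>j\<in>J. F j (u \<circ> g j)) \<and> z = join n k u (prj u)" using uX uF by blast
  next
    assume "\<exists>u. u \<in> X \<and> (\<forall>j\<in>J. F j (u \<circ> g j)) \<and> z = join n k u (prj u)"
    then obtain u where uX: "u \<in> X" and uF: "\<forall>j\<in>J. F j (u \<circ> g j)" and zu: "z = join n k u (prj u)" by blast
    have zR: "z \<in> Rn (n + k)" using zu by (simp add: join_Rn)
    have uz: "\<forall>i<n. z i = u i" using zu by (simp add: join_lo)
    have "PX u" using uX Xe by blast
    then have p1: "PX z" using PXdep[OF uz] by simp
    have p2: "\<forall>t\<in>{..<k}. z (n + t) = z (s t)"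
    proof
      fix t assume t: "t \<in> {..<k}"
      then have "z (n + t) = prj u t" using zu by (simp add: join_hi)
      also have "\<dots> = u (s t)" using t unfolding prj_def by simp
      also have "\<dots> = z (s t)" using uz s_lt t by simp
      finally show "z (n + t) = z (s t)" .
    qed
    have p3: "\<forall>j\<in>J. F j (z \<circ> g j)" using uF Fdep uz by blast
    show "z \<in> Z" unfolding Z_def Pz_def using zR p1 p2 p3 by blast
  qed
  have XRn: "u \<in> Rn n" if "u \<in> X" for u using XR that by blast
  have fib1: "\<forall>u. finite {v \<in> Rn k. join n k u v \<in> Z}"
  proof
    fix u :: "nat \<Rightarrow> 'a"
    have "{v \<in> Rn k. join n k u v \<in> Z} \<subseteq> {prj (restr n u)}"
    proof
      fix v assume v: "v \<in> {v \<in> Rn k. join n k u v \<in> Z}"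
      then obtain u' where u': "u' \<in> X" "join n k u v = join n k u' (prj u')" using zchar by blast
      have c1: "\<forall>i<n. u i = u' i" and c2: "\<forall>t<k. v t = prj u' t" using join_comp[OF u'(2)] by auto
      have "u' = restr n u"
      proof
        fix i show "u' i = restr n u i"
        proof (cases "i < n")
          case True then show ?thesis using c1 unfolding restr_def by simp
        next
          case False then show ?thesis using XRn[OF u'(1)] unfolding Rn_iff restr_def by simp
        qed
      qed
      moreover have "v = prj u'"
      proof
        fix t show "v t = prj u' t"
        proof (cases "t < k")
          case True then show ?thesis using c2 by simp
        next
          case False then show ?thesis using v unfolding Rn_iff prj_def by simp
        qed
      qed
      ultimately show "v \<in> {prj (restr n u)}" by simp
    qed
    then show "finite {v \<in> Rn k. join n k u v \<in> Z}" using finite_subset by blast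
  qed
  have fib2: "\<forall>v. finite {u \<in> Rn n. join n k u v \<in> Z}"
  proof
    fix v :: "nat \<Rightarrow> 'a"
    define Fib where "Fib = {u \<in> Rn n. join n k u v \<in> Z}"
    have mem: "u \<in> X \<and> (\<forall>j\<in>J. F j (u \<circ> g j)) \<and> (\<forall>t<k. v t = u (s t))" if "u \<in> Fib" for u
    proof -
      from that have uR: "u \<in> Rn n" and "join n k u v \<in> Z" unfolding Fib_def by auto
      then obtain u' where u': "u' \<in> X" "\<forall>j\<in>J. F j (u' \<circ> g j)" "join n k u v = join n k u' (prj u')"
        using zchar by blast
      have c1: "\<forall>i<n. u i = u' i" and c2: "\<forall>t<k. v t = prj u' t" using join_comp[OF u'(3)] by auto
      have "u = u'"
      proof
        fix i show "u i = u' i"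
        proof (cases "i < n")
          case True then show ?thesis using c1 by simp
        next
          case False then show ?thesis using uR XRn[OF u'(1)] unfolding Rn_iff by simp
        qed
      qed
      then show ?thesis using u' c2 unfolding prj_def by auto
    qed
    have "finite Fib"
    proof (cases "Fib = {}")
      case True then show ?thesis by simp
    next
      case False
      then obtain u0 where u0: "u0 \<in> Fib" by blast
      define G where "G = (\<lambda>j. {e. E j (\<lambda>i. if i = 0 then e else if i \<le> k then v (i - 1) else undefined)})"
      have Geq: "{e. E j ((u \<circ> g j)(0 := e))} = G j" if uF: "u \<in> Fib" and j: "j \<in> J" for u j
      proof -
        have m: "\<forall>t<k. v t = u (s t)" using mem[OF uF] by blast
        have "E j ((u \<circ> g j)(0 := e)) = E j (\<lambda>i. if i = 0 then e else if i \<le> k then v (i - 1) else undefined)" for e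
        proof (rule dfn_dep[OF dE[OF j]])
          fix i assume i: "i \<in> {..k}"
          show "((u \<circ> g j)(0 := e)) i = (if i = 0 then e else if i \<le> k then v (i - 1) else undefined)"
          proof (cases "i = 0")
            case True then show ?thesis by simp
          next
            case False
            then have "i - 1 < k" using i by auto
            then show ?thesis using m False i unfolding g_def by simp
          qed
        qed
        then show ?thesis unfolding G_def by simp
      qed
      have finG: "finite (G j)" if j: "j \<in> J" for j
      proof -
        have "F j (u0 \<circ> g j)" using mem[OF u0] j by blast
        then have "finite {e. E j ((u0 \<circ> g j)(0 := e))}" unfolding F_def by blast
        then show ?thesis using Geq[OF u0 j] by simp
      qed
      have uG: "u j \<in> G j" if uF: "u \<in> Fib" and j: "j \<in> J" for u j
      proof -
        have "E j (u \<circ> g j)" using mem[OF uF] j unfolding F_def by blast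
        moreover have "(u \<circ> g j)(0 := u j) = u \<circ> g j" unfolding g_def by (auto simp: fun_eq_iff)
        ultimately have "u j \<in> {e. E j ((u \<circ> g j)(0 := e))}" by simp
        then show ?thesis using Geq[OF uF j] by simp
      qed
      define inv_s where "inv_s = inv_into {..<k} s"
      have sub: "Fib \<subseteq> PiE {..<n} (\<lambda>i. if i \<in> S then {v (inv_s i)} else G i)"
      proof
        fix u assume u: "u \<in> Fib"
        have uR: "u \<in> Rn n" using u unfolding Fib_def by blast
        show "u \<in> PiE {..<n} (\<lambda>i. if i \<in> S then {v (inv_s i)} else G i)"
          unfolding PiE_iff
        proof (intro conjI ballI)
          fix i assume i: "i \<in> {..<n}"
          show "u i \<in> (if i \<in> S then {v (inv_s i)} else G i)"
          proof (cases "i \<in> S")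
            case True
            then have iS: "i \<in> s ` {..<k}" using s_img by simp
            have t1: "inv_s i < k" using inv_into_into[OF iS] unfolding inv_s_def by simp
            have t2: "s (inv_s i) = i" using f_inv_into_f[OF iS] unfolding inv_s_def by simp
            have "v (inv_s i) = u (s (inv_s i))" using mem[OF u] t1 by blast
            then show ?thesis using True t2 by simp
          next
            case False then have "i \<in> J" using i unfolding J_def by blast
            then show ?thesis using uG[OF u] False by simp
          qed
        next
          show "u \<in> extensional {..<n}" using uR unfolding Rn_def PiE_iff by blast
        qed
      qed
      have "finite (PiE {..<n} (\<lambda>i. if i \<in> S then {v (inv_s i)} else G i))"
      proof (rule finite_PiE)
        fix i assume i: "i \<in> {..<n}"
        show "finite (if i \<in> S then {v (inv_s i)} else G i)"
        proof (cases "i \<in> S")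
          case True then show ?thesis by simp
        next
          case False then have "i \<in> J" using i unfolding J_def by blast
          then show ?thesis using finG False by simp
        qed
      qed simp
      then show ?thesis using sub finite_subset by blast
    qed
    then show "finite {u \<in> Rn n. join n k u v \<in> Z}" unfolding Fib_def .
  qed
  define zx where "zx = join n k x y"
  have xF: "\<forall>j\<in>J. F j (x \<circ> g j)"
  proof
    fix j assume j: "j \<in> J"
    have agree: "((x \<circ> g j)(0 := e)) i = (\<lambda>i. if 0 < i \<and> i \<le> k then c (i - 1) else e) i"
      if "i \<in> {..k}" for i e
    proof (cases "i = 0")
      case True then show ?thesis by simp
    next
      case False then show ?thesis using that unfolding g_def c_def by simp
    qed
    have "E j (x \<circ> g j) = E j (\<lambda>i. if 0 < i \<and> i \<le> k then c (i - 1) else x j)"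
    proof (rule dfn_dep[OF dE[OF j]])
      fix i assume i: "i \<in> {..k}"
      show "(x \<circ> g j) i = (if 0 < i \<and> i \<le> k then c (i - 1) else x j)"
      proof (cases "i = 0")
        case True then show ?thesis unfolding g_def by simp
      next
        case False then show ?thesis using i unfolding g_def c_def by simp
      qed
    qed
    then have E1: "E j (x \<circ> g j)" using E j by blast
    have E2: "{e. E j ((x \<circ> g j)(0 := e))} = {e. E j (\<lambda>i. if 0 < i \<and> i \<le> k then c (i - 1) else e)}"
    proof -
      have "E j ((x \<circ> g j)(0 := e)) = E j (\<lambda>i. if 0 < i \<and> i \<le> k then c (i - 1) else e)" for e
        by (rule dfn_dep[OF dE[OF j]]) (rule agree)
      then show ?thesis by simp
    qed
    have E3: "finite {e. E j (\<lambda>i. if 0 < i \<and> i \<le> k then c (i - 1) else e)}" using E j by blast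
    show "F j (x \<circ> g j)" unfolding F_def Nn_def using E1 E2 E3 by simp
  qed
  have zxZ: "zx \<in> Z" unfolding zchar zx_def y_def using xX xF by blast
  have zx_lo: "zx i = x i" if "i < n" for i unfolding zx_def using that by (simp add: join_lo)
  have zx_hi: "zx (n + t) = y t" if "t < k" for t unfolding zx_def using that by (simp add: join_hi)
  have zxT0: "zx ` {n..<n + k} = x ` S"
  proof -
    have "{n..<n + k} = (\<lambda>t. n + t) ` {..<k}"
    proof
      show "{n..<n + k} \<subseteq> (\<lambda>t. n + t) ` {..<k}"
      proof
        fix i assume "i \<in> {n..<n + k}"
        then have "i - n \<in> {..<k}" "i = n + (i - n)" by auto
        then show "i \<in> (\<lambda>t. n + t) ` {..<k}" by (rule rev_image_eqI)
      qed
    qed auto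
    then have "zx ` {n..<n + k} = (\<lambda>t. zx (n + t)) ` {..<k}" by (simp add: image_image)
    also have "\<dots> = y ` {..<k}" by (rule image_cong) (simp_all add: zx_hi)
    finally show ?thesis using xS by simp
  qed
  have dimzx: "dim_over I (n + k) zx A = k"
  proof (rule antisym)
    have "dim_over I (n + k) zx A \<le> card {n..<n + k}"
    proof (rule dim_over_le)
      show "{n..<n + k} \<subseteq> {..<n + k}" by auto
      show "\<forall>i<n + k. zx i \<in> acl I (A \<union> zx ` {n..<n + k})"
      proof (intro allI impI)
        fix i assume i: "i < n + k"
        show "zx i \<in> acl I (A \<union> zx ` {n..<n + k})"
        proof (cases "i < n")
          case True then show ?thesis using S(3) zx_lo zxT0 by simp
        next
          case False then show ?thesis using i by (intro acl_base) auto
        qed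
      qed
    qed
    then show "dim_over I (n + k) zx A \<le> k" by simp
    obtain T where T: "T \<subseteq> {..<n + k}" "card T = dim_over I (n + k) zx A" "\<forall>i<n + k. zx i \<in> acl I (A \<union> zx ` T)"
      using dim_over_wit by blast
    have fT: "finite T" using T(1) finite_subset by blast
    define \<rho> where "\<rho> = (\<lambda>i. if i < n then i else s (i - n))"
    have zxT: "zx ` T = x ` (\<rho> ` T)"
    proof -
      have "zx ` T = (\<lambda>i. x (\<rho> i)) ` T"
      proof (rule image_cong)
        fix i assume "i \<in> T"
        then have i: "i < n + k" using T(1) by auto
        show "zx i = x (\<rho> i)"
        proof (cases "i < n")
          case True then show ?thesis using zx_lo unfolding \<rho>_def by simp
        next
          case False
          then have t: "i - n < k" "i = n + (i - n)" using i by auto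
          have "zx i = y (i - n)" using zx_hi[OF t(1)] t(2) by metis
          then show ?thesis using y_t[OF t(1)] False unfolding \<rho>_def by simp
        qed
      qed simp
      then show ?thesis by (simp add: image_image)
    qed
    have rT: "\<rho> ` T \<subseteq> {..<n}" using T(1) s_lt unfolding \<rho>_def by auto
    have "\<forall>i<n. x i \<in> acl I (A \<union> x ` (\<rho> ` T))"
    proof (intro allI impI)
      fix i assume i: "i < n"
      have "zx i \<in> acl I (A \<union> zx ` T)" using T(3) i by simp
      then show "x i \<in> acl I (A \<union> x ` (\<rho> ` T))" using zx_lo[OF i] zxT by simp
    qed
    then have "k \<le> card (\<rho> ` T)" using dim_over_le[OF rT] unfolding k_def by blast
    also have "\<dots> \<le> card T" using card_image_le[OF fT] .
    finally show "k \<le> dim_over I (n + k) zx A" using T(2) by simp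
  qed
  have dimZ: "dim I (n + k) Z = int k"
  proof (rule antisym)
    have le: "dim_over I (n + k) z A' \<le> k" if A': "countable A'" "definable_over I (n + k) A' Z" "z \<in> Z" for z A'
    proof -
      have "dim_over I (n + k) z A' \<le> card {n..<n + k}"
      proof (rule dim_over_le)
        show "{n..<n + k} \<subseteq> {..<n + k}" by auto
        have fz: "finite {u \<in> Rn n. join n k u (shft n k z) \<in> Z}" using fib2 by blast
        show "\<forall>i<n + k. z i \<in> acl I (A' \<union> z ` {n..<n + k})"
        proof (intro allI impI)
          fix i assume i: "i < n + k"
          show "z i \<in> acl I (A' \<union> z ` {n..<n + k})"
          proof (cases "i < n")
            case True then show ?thesis by (rule fiber_acl[OF A'(2) A'(3) _ fz])
          next
            case False then show ?thesis using i by (intro acl_base) auto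
          qed
        qed
      qed
      then show ?thesis by simp
    qed
    have neZ: "Z \<noteq> {}" using zxZ by blast
    show "dim I (n + k) Z \<le> int k" by (rule dim_le[OF dZ neZ le])
    obtain A0 where A0: "finite A0" "A0 \<subseteq> A" "definable_over I (n + k) A0 Z"
      using definable_over_finite[OF dZ] by blast
    have "int (dim_over I (n + k) zx A0) \<le> dim I (n + k) Z"
      by (rule dim_ge[OF countable_finite[OF A0(1)] A0(3) zxZ])
    moreover have "dim_over I (n + k) zx A \<le> dim_over I (n + k) zx A0" by (rule dim_over_anti[OF A0(2)])
    ultimately show "int k \<le> dim I (n + k) Z" using dimzx by linarith
  qed
  have genZ: "generic I (n + k) Z (join n k x y) A"
    unfolding generic_def using zxZ dimzx dimZ unfolding zx_def by simp
  have ZsubT: "Z \<subseteq> tprod n k X (Rn k)"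
  proof
    fix z assume "z \<in> Z"
    then obtain u where "u \<in> X" "z = join n k u (prj u)" using zchar by blast
    then show "z \<in> tprod n k X (Rn k)" unfolding tprod_def using prjR by blast
  qed
  have dimXk: "dim I n X = int k" using dimx unfolding k_def by simp
  have conds: "definable_over I n A X \<and> definable_over I k A (Rn k) \<and> definable_over I (n + k) A Z \<and>
          Z \<subseteq> tprod n k X (Rn k) \<and> dim I n X = dim I k (Rn k) \<and> dim I (n + k) Z = dim I n X \<and>
          (\<forall>u. finite {v \<in> Rn k. join n k u v \<in> Z}) \<and>
          (\<forall>v. finite {u \<in> Rn n. join n k u v \<in> Z}) \<and>
          x \<in> Rn n \<and> y \<in> Rn k \<and> generic I (n + k) Z (join n k x y) A"
    using dX definable_Rn dZ ZsubT dimXk dimY dimZ fib1 fib2 XRn[OF xX] prjR genZ unfolding y_def by simp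
  obtain U V f where U: "openin (subtopology (Tn \<tau> n) X) U" "x \<in> U"
    and V: "openin (subtopology (Tn \<tau> k) (Rn k)) V" "y \<in> V"
    and hf: "homeomorphic_map (subtopology (Tn \<tau> n) U) (subtopology (Tn \<tau> k) V) f"
    and ZU: "Z \<inter> tprod n k U V = graph n k U f"
    using h5[rule_format, OF conds] by blast
  \<comment> \<open>Step 6: shrinking to a definable loric neighbourhood\<close>
  have Tn_n: "topspace (Tn \<tau> n) = Rn n" using Tn_topspace[OF top] .
  have Tn_k: "topspace (Tn \<tau> k) = Rn k" using Tn_topspace[OF top] .
  have VR: "V \<subseteq> Rn k" using openin_subset[OF V(1)] Tn_k by simp
  have Vo: "openin (Tn \<tau> k) V" using V(1) Tn_k subtopology_topspace by metis
  have UX: "U \<subseteq> X" using openin_subset[OF U(1)] by simp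
  have topU: "topspace (subtopology (Tn \<tau> n) U) = U" using UX XR Tn_n by auto
  have topV: "topspace (subtopology (Tn \<tau> k) V) = V" using VR Tn_k by auto
  have fU: "f ` U = V" using homeomorphic_imp_surjective_map[OF hf] topU topV by simp
  have f_prj: "f u = prj u" if u: "u \<in> U" for u
  proof -
    have fuV: "f u \<in> V" using fU u by blast
    have "join n k u (f u) \<in> graph n k U f" unfolding graph_def using u by blast
    then have "join n k u (f u) \<in> Z" using ZU by blast
    then obtain u' where u': "u' \<in> X" "join n k u (f u) = join n k u' (prj u')" using zchar by blast
    have "u = u' \<and> f u = prj u'"
      by (rule join_inj[OF _ _ _ prjR u'(2)]) (use u UX XRn fuV VR u'(1) in auto)
    then show ?thesis by (elim conjE) (simp only:)
  qed
  have X'X: "X' \<subseteq> X" using openin_subset[OF X'o] by simp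
  have "openin (subtopology (Tn \<tau> n) X) (U \<inter> X')" using U(1) X'o by (rule openin_Int)
  then obtain O0 where O0: "openin (Tn \<tau> n) O0" "U \<inter> X' = O0 \<inter> X" unfolding openin_subtopology by blast
  have xO0: "x \<in> O0" using O0(2) U(2) xX' by blast
  obtain B where B: "x \<in> B" "B \<subseteq> O0" "openin (Tn \<tau> n) B" "definable I n B"
    using box[OF tm O0(1) xO0] by blast
  define U2 where "U2 = X \<inter> B"
  have U2sub: "U2 \<subseteq> U \<inter> X'" using O0(2) B(2) unfolding U2_def by blast
  have U2eq: "U2 = X' \<inter> B" using U2sub X'X unfolding U2_def by blast
  have U2eq': "U2 = U \<inter> B" using U2sub UX unfolding U2_def by blast
  have xU2: "x \<in> U2" using xX B(1) unfolding U2_def by blast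
  have U2o: "openin (subtopology (Tn \<tau> n) X) U2" unfolding U2_def by (rule openin_subtopology_Int2[OF B(3)])
  have dU2: "definable I n U2"
  proof -
    obtain PB where dPB: "dfn I UNIV {..<n} PB" and Be: "B = {v \<in> Rn n. PB v}"
      using B(4) unfolding definable_def definable_iff by blast
    have dPX': "dfn I UNIV {..<n} PX" using dfn_mono_A[OF dPX] by simp
    have "dfn I UNIV {..<n} (\<lambda>v. PX v \<and> PB v)" by (rule dfn_conj[OF _ dPX' dPB]) simp
    moreover have "U2 = {v \<in> Rn n. PX v \<and> PB v}" unfolding U2_def using Xe Be by blast
    moreover have "U2 \<subseteq> Rn n" using XR unfolding U2_def by blast
    ultimately show ?thesis unfolding definable_def definable_iff by blast
  qed
  have LU2: "L n U2"
  proof -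
    have "openin (subtopology (Tn \<tau> n) X') U2" unfolding U2eq by (rule openin_subtopology_Int2[OF B(3)])
    then show ?thesis using lore_iii[OF lo] LX' dU2 by blast
  qed
  define V2 where "V2 = prj ` U2"
  have fU2: "f ` U2 = V2" unfolding V2_def using f_prj U2sub by (intro image_cong) auto
  have V2V: "V2 \<subseteq> V" using fU2 fU U2sub by blast
  have U2oU: "openin (subtopology (Tn \<tau> n) U) U2" unfolding U2eq' by (rule openin_subtopology_Int2[OF B(3)])
  have "openin (subtopology (Tn \<tau> k) V) (f ` U2)"
    using homeomorphic_map_openness[OF hf, of U2] topU U2sub U2oU by blast
  then have V2o: "openin (Tn \<tau> k) V2" using openin_trans_full[OF _ Vo] fU2 by simp
  have hf2: "homeomorphic_map (subtopology (Tn \<tau> n) U2) (subtopology (Tn \<tau> k) V2) prj"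
  proof -
    have "f ` (topspace (subtopology (Tn \<tau> n) U) \<inter> U2) = topspace (subtopology (Tn \<tau> k) V) \<inter> V2"
      using topU topV fU2 U2sub V2V by auto
    then have "homeomorphic_map (subtopology (subtopology (Tn \<tau> n) U) U2) (subtopology (subtopology (Tn \<tau> k) V) V2) f"
      by (rule homeomorphic_map_subtopologies[OF hf])
    moreover have "U \<inter> U2 = U2" "V \<inter> V2 = V2" using U2sub V2V by auto
    ultimately have h: "homeomorphic_map (subtopology (Tn \<tau> n) U2) (subtopology (Tn \<tau> k) V2) f"
      by (simp add: subtopology_subtopology)
    show ?thesis
    proof (rule homeomorphic_map_eq[OF h])
      fix u assume "u \<in> topspace (subtopology (Tn \<tau> n) U2)"
      then have "u \<in> U2" by simp
      then show "f u = prj u" using f_prj U2sub by blast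
    qed
  qed
  have Lgraph: "L (n + k) (graph n k U2 prj)"
  proof -
    have Lt: "L (n + k) (tprod n k U2 (Rn k))" using lore_prod[OF lo] LU2 lore_Rn[OF lo] by blast
    have Li: "L (n + k) (tprod n k U2 (Rn k) \<inter> {z \<in> Rn (n + k). \<forall>t\<in>{..<k}. z (s t) = z (n + t)})"
    proof (rule lore_inter_diag[OF lo Lt])
      fix t assume "t \<in> {..<k}"
      then have "s t < n" using s_lt by simp
      then show "s t < n + k \<and> n + t < n + k \<and> s t \<noteq> n + t" using \<open>t \<in> {..<k}\<close> by auto
    qed simp
    have "graph n k U2 prj = tprod n k U2 (Rn k) \<inter> {z \<in> Rn (n + k). \<forall>t\<in>{..<k}. z (s t) = z (n + t)}"
    proof
      show "graph n k U2 prj \<subseteq> tprod n k U2 (Rn k) \<inter> {z \<in> Rn (n + k). \<forall>t\<in>{..<k}. z (s t) = z (n + t)}"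
      proof
        fix z assume "z \<in> graph n k U2 prj"
        then obtain u where u: "u \<in> U2" "z = join n k u (prj u)" unfolding graph_def by blast
        have "z \<in> tprod n k U2 (Rn k)" unfolding tprod_def using u prjR by blast
        moreover have "z \<in> Rn (n + k)" using u(2) by (simp add: join_Rn)
        moreover have "\<forall>t\<in>{..<k}. z (s t) = z (n + t)"
        proof
          fix t assume t: "t \<in> {..<k}"
          have "z (s t) = u (s t)" using u(2) s_lt t by (simp add: join_lo)
          moreover have "z (n + t) = prj u t" using u(2) t by (simp add: join_hi)
          ultimately show "z (s t) = z (n + t)" using t unfolding prj_def by simp
        qed
        ultimately show "z \<in> tprod n k U2 (Rn k) \<inter> {z \<in> Rn (n + k). \<forall>t\<in>{..<k}. z (s t) = z (n + t)}" by blast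
      qed
      show "tprod n k U2 (Rn k) \<inter> {z \<in> Rn (n + k). \<forall>t\<in>{..<k}. z (s t) = z (n + t)} \<subseteq> graph n k U2 prj"
      proof
        fix z assume z: "z \<in> tprod n k U2 (Rn k) \<inter> {z \<in> Rn (n + k). \<forall>t\<in>{..<k}. z (s t) = z (n + t)}"
        then obtain u v where uv: "u \<in> U2" "v \<in> Rn k" "z = join n k u v" unfolding tprod_def by blast
        have "v = prj u"
        proof
          fix t show "v t = prj u t"
          proof (cases "t < k")
            case True
            have "z (s t) = z (n + t)" using z True by simp
            moreover have "z (s t) = u (s t)" using uv(3) s_lt[OF True] by (simp add: join_lo)
            moreover have "z (n + t) = v t" using uv(3) True by (simp add: join_hi)
            ultimately show ?thesis using True unfolding prj_def by simp
          next
            case False then show ?thesis using uv(2) unfolding Rn_iff prj_def by simp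
          qed
        qed
        then show "z \<in> graph n k U2 prj" unfolding graph_def using uv by blast
      qed
    qed
    then show ?thesis using Li by simp
  qed
  have nk: "nat (dim I n X) = k" using dimXk by simp
  have lh: "loric_homeomorphism \<tau> L n k U2 V2 prj"
    unfolding loric_homeomorphism_def loric_map_def
    using homeomorphic_imp_continuous_map[OF hf2] Lgraph hf2 by blast
  show ?thesis unfolding lman_def nk using xX dU2 U2o xU2 V2o lh by blast
qed

end
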